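(* Assume the setting below and that $|\lambda_{ij}|<1$ for all $i\neq j$. For each $i$, the probability that $C_i$ is a Condorcet winner among $n$ voters converges, as $n\to\infty$, to $$L\bigl((\delta_{ij})_{j\neq i};R_i\bigr),$$ and hence the probability $P(n,m)$ that some candidate is a Condorcet winner satisfies $$\lim_{n\to\infty}P(n,m)=\sum_{i=1}^m L\bigl(\delta_{i1},\dots,\delta_{i,i-1},\delta_{i,i+1},\dots,\delta_{im};R_i\bigr).$$ This holds for $n$ running through all positive integers (both odd and even).
   Context: There are $m\ge 2$ candidates $C_1,\dots,C_m$ and $K=m!$ strict rankings (linear orders) of them, indexed $r=1,\dots,K$. Each of $n$ voters independently chooses ranking $r$ with probability $p_r$ ($p_r\ge0$, $\sum_r p_r=1$); $N_r$ is the number of voters choosing ranking $r$, so $(N_1,\dots,N_K)$ is multinomial$(n;p_1,\dots,p_K)$. For $i\ne j$, let $a_{r,(i,j)}=1$ if ranking $r$ places $C_i$ above $C_j$ and $a_{r,(i,j)}=-1$ otherwise. $C_i$ beats $C_j$ by majority if $\sum_r a_{r,(i,j)}N_r\ge1$; $C_i$ is a Condorcet winner if it beats every $C_j$, $j\ne i$. Let $\lambda_{ij}=\sum_r a_{r,(i,j)}p_r$. For distinct $i,j,l$ let $a_{r,(i,j),l}=1$ if in ranking $r$ either $C_i$ is above both $C_j$ and $C_l$ or $C_i$ is below both, and $a_{r,(i,j),l}=-1$ otherwise; set $$R^{(i)}_{jl}=\frac{\sum_r a_{r,(i,j),l}p_r-\lambda_{ij}\lambda_{il}}{\sqrt{(1-\lambda_{ij}^2)(1-\lambda_{il}^2)}},\qquad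 R^{(i)}_{jj}=1,$$ and let $R_i$ be the $(m-1)\times(m-1)$ matrix $(R^{(i)}_{jl})_{j,l\ne i}$ (the correlation matrix of the vector $(X_{ij})_{j\neq i}$, where $X_{ij}=\pm1$ according as a single random voter ranks $C_i$ above/below $C_j$). Let $\delta_{ij}=-\infty$ if $\lambda_{ij}>0$, $+\infty$ if $\lambda_{ij}<0$, and $0$ if $\lambda_{ij}=0$. For a correlation matrix $R$ of size $d$ and $h_1,\dots,h_d\in\{-\infty,0,+\infty\}$, $L(h_1,\dots,h_d;R)=P(Z_1\ge h_1,\dots,Z_d\ge h_d)$ where $(Z_1,\dots,Z_d)\sim N(0,R)$; a coordinate with $h=-\infty$ imposes no constraint and any coordinate with $h=+\infty$ makes $L=0$. *)

theory Defs
  imports "HOL-Probability.Probability" "HOL-Combinatorics.Multiset_Permutations"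
begin

text \<open>Candidates are 0,...,m-1. A ranking is a list listing all candidates
  without repetition, best first; the set of rankings is
  permutations_of_set {0..<m} (it has m! elements).\<close>

definition rankings :: "nat \<Rightarrow> nat list set" where
  "rankings m = permutations_of_set {0..<m}"

definition above :: "nat list \<Rightarrow> nat \<Rightarrow> nat \<Rightarrow> bool" where
  "above r i j \<longleftrightarrow> (\<exists>a b. a < b \<and> b < length r \<and> r ! a = i \<and> r ! b = j)"

definition a_pair :: "nat list \<Rightarrow> nat \<Rightarrow> nat \<Rightarrow> real" where
  "a_pair r i j = (if above r i j then 1 else -1)"

definition a_triple :: "nat list \<Rightarrow> nat \<Rightarrow> nat \<Rightarrow> nat \<Rightarrow> real" where
  "a_triple r i j l =
     (if (above r i j \<and> above r i l) \<or> (above r j i \<and> above r l i) then 1 else -1)"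

definition lam :: "nat \<Rightarrow> (nat list \<Rightarrow> real) \<Rightarrow> nat \<Rightarrow> nat \<Rightarrow> real" where
  "lam m p i j = (\<Sum>r\<in>rankings m. a_pair r i j * p r)"

text \<open>Entries of the correlation matrix R_i, indexed by j,l in {0..<m} - {i}.\<close>
definition corrR :: "nat \<Rightarrow> (nat list \<Rightarrow> real) \<Rightarrow> nat \<Rightarrow> nat \<Rightarrow> nat \<Rightarrow> real" where
  "corrR m p i j l =
     (if j = l then 1
      else ((\<Sum>r\<in>rankings m. a_triple r i j l * p r) - lam m p i j * lam m p i l)
           / sqrt ((1 - (lam m p i j)\<^sup>2) * (1 - (lam m p i l)\<^sup>2)))"

definition delta :: "nat \<Rightarrow> (nat list \<Rightarrow> real) \<Rightarrow> nat \<Rightarrow> nat \<Rightarrow> ereal" where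
  "delta m p i j =
     (if lam m p i j > 0 then -\<infinity> else if lam m p i j < 0 then \<infinity> else 0)"

text \<open>Gaussian orthant probability L(h;R) = P(Z_j \<ge> h_j for all j in I) where
  Z ~ N(0,R) is indexed by the finite set I. Z is realised as Z = A W with W a
  vector of i.i.d. standard normals indexed by I and A any real matrix with
  A A^T = R (such A exists for a positive semidefinite R; the law of A W does
  not depend on the choice of A).\<close>
definition std_normal :: "real measure" where
  "std_normal = density lborel std_normal_density"

definition gauss_orthant :: "nat set \<Rightarrow> (nat \<Rightarrow> nat \<Rightarrow> real) \<Rightarrow> (nat \<Rightarrow> ereal) \<Rightarrow> real" where
  "gauss_orthant I R h =
     (let A = (SOME A :: nat \<Rightarrow> nat \<Rightarrow> real.
                 \<forall>j\<in>I. \<forall>l\<in>I. (\<Sum>k\<in>I. A j k * A l k) = R j l)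
      in measure (PiM I (\<lambda>_. std_normal))
           {w \<in> space (PiM I (\<lambda>_. std_normal)).
              \<forall>j\<in>I. ereal (\<Sum>k\<in>I. A j k * w k) \<ge> h j})"

text \<open>Profiles of n voters: lists of n rankings; the probability of a profile is
  the product of the p's. N_r = count_list vs r is the number of voters with
  ranking r, so (N_r) is multinomial(n; p).\<close>
definition profiles :: "nat \<Rightarrow> nat \<Rightarrow> nat list list set" where
  "profiles m n = {vs. length vs = n \<and> set vs \<subseteq> rankings m}"

definition profile_prob :: "(nat list \<Rightarrow> real) \<Rightarrow> nat list list \<Rightarrow> real" where
  "profile_prob p vs = (\<Prod>k<length vs. p (vs ! k))"

definition condorcet_winner :: "nat \<Rightarrow> nat list list \<Rightarrow> nat \<Rightarrow> bool" where
  "condorcet_winner m vs i \<longleftrightarrow>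
     (\<forall>j<m. j \<noteq> i \<longrightarrow>
        (\<Sum>r\<in>rankings m. a_pair r i j * real (count_list vs r)) \<ge> 1)"

definition prob_event :: "nat \<Rightarrow> (nat list \<Rightarrow> real) \<Rightarrow> nat \<Rightarrow> (nat list list \<Rightarrow> bool) \<Rightarrow> real" where
  "prob_event m p n E = (\<Sum>vs\<in>{vs\<in>profiles m n. E vs}. profile_prob p vs)"

end

theory Submission
  imports Defs "HOL-Real_Asymp.Real_Asymp"
begin

lemma finite_rankings: "finite (rankings m)"
  by (simp add: rankings_def)

lemma finite_profiles: "finite (profiles m n)"
proof -
  have "profiles m n = {vs. set vs \<subseteq> rankings m \<and> length vs = n}"
    by (auto simp: profiles_def)
  then show ?thesis using finite_lists_length_eq[OF finite_rankings] by simp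
qed

lemma profiles_0: "profiles m 0 = {[]}"
  by (auto simp: profiles_def)

lemma profiles_Suc: "profiles m (Suc n) = (\<lambda>(r,vs). r#vs) ` (rankings m \<times> profiles m n)"
proof (rule set_eqI, rule iffI)
  fix x assume "x \<in> profiles m (Suc n)"
  then obtain r vs where "x = r # vs" "length vs = n" "r \<in> rankings m" "set vs \<subseteq> rankings m"
    by (cases x) (auto simp: profiles_def)
  then show "x \<in> (\<lambda>(r,vs). r#vs) ` (rankings m \<times> profiles m n)"
    by (auto simp: profiles_def image_iff)
qed (auto simp: profiles_def)

lemma sum_profiles_Suc:
  "(\<Sum>vs\<in>profiles m (Suc n). F vs) = (\<Sum>r\<in>rankings m. \<Sum>vs\<in>profiles m n. F (r#vs))"
proof -
  have inj: "inj_on (\<lambda>(r,vs). r#vs) (rankings m \<times> profiles m n)"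
    by (auto simp: inj_on_def)
  have "(\<Sum>vs\<in>profiles m (Suc n). F vs) = (\<Sum>x\<in>rankings m \<times> profiles m n. F ((\<lambda>(r,vs). r#vs) x))"
    unfolding profiles_Suc by (subst sum.reindex[OF inj]) (simp add: o_def)
  also have "\<dots> = (\<Sum>r\<in>rankings m. \<Sum>vs\<in>profiles m n. F (r#vs))"
    by (simp add: sum.cartesian_product split_def)
  finally show ?thesis .
qed

lemma profile_prob_Cons: "profile_prob p (r#vs) = p r * profile_prob p vs"
  unfolding profile_prob_def length_Cons prod.lessThan_Suc_shift by simp

lemma profile_prob_Nil: "profile_prob p [] = 1"
  unfolding profile_prob_def by simp

lemma sum_profiles_mult:
  fixes \<Phi> :: "nat list list \<Rightarrow> 'a::comm_semiring_1"
  assumes "\<And>r vs. r \<in> rankings m \<Longrightarrow> \<Phi> (r#vs) = f r * \<Phi> vs"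
  shows "(\<Sum>vs\<in>profiles m n. \<Phi> vs) = (\<Sum>r\<in>rankings m. f r) ^ n * \<Phi> []"
proof (induction n)
  case 0 then show ?case by (simp add: profiles_0)
next
  case (Suc n)
  have "(\<Sum>vs\<in>profiles m (Suc n). \<Phi> vs) = (\<Sum>r\<in>rankings m. \<Sum>vs\<in>profiles m n. f r * \<Phi> vs)"
    unfolding sum_profiles_Suc by (intro sum.cong refl) (simp add: assms)
  also have "\<dots> = (\<Sum>r\<in>rankings m. f r * (\<Sum>r\<in>rankings m. f r) ^ n * \<Phi> [])"
    by (simp add: sum_distrib_left[symmetric] Suc mult.assoc)
  also have "\<dots> = (\<Sum>r\<in>rankings m. f r) ^ Suc n * \<Phi> []"
    by (simp add: sum_distrib_right[symmetric] mult.assoc)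
  finally show ?case .
qed

definition Sv :: "nat \<Rightarrow> nat \<Rightarrow> nat list list \<Rightarrow> nat \<Rightarrow> real" where
  "Sv m i vs j = (\<Sum>r\<in>rankings m. a_pair r i j * real (count_list vs r))"

lemma Sv_Nil: "Sv m i [] j = 0"
  by (simp add: Sv_def)

lemma Sv_Cons: assumes "r \<in> rankings m" shows "Sv m i (r#vs) j = a_pair r i j + Sv m i vs j"
proof -
  have e: "real (count_list (r#vs) x) = real (count_list vs x) + (if r = x then 1 else 0)" for x by simp
  have "Sv m i (r#vs) j = (\<Sum>x\<in>rankings m. a_pair x i j * (if r = x then 1 else 0)) + Sv m i vs j"
    unfolding Sv_def e by (simp add: algebra_simps sum.distrib)
  also have "(\<Sum>x\<in>rankings m. a_pair x i j * (if r = x then 1 else 0)) = a_pair r i j"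
    using assms finite_rankings by (simp add: if_distrib cong: if_cong)
  finally show ?thesis .
qed

lemma Sv_Ints: "Sv m i vs j \<in> \<int>"
  unfolding Sv_def a_pair_def by (intro Ints_sum) auto

lemma prob_total:
  assumes "(\<Sum>r\<in>rankings m. p r) = 1"
  shows "(\<Sum>vs\<in>profiles m n. profile_prob p vs) = 1"
  using sum_profiles_mult[of m "profile_prob p" p n] assms
  by (simp add: profile_prob_Cons profile_prob_Nil)

lemma prob_nonneg:
  assumes "\<forall>r\<in>rankings m. p r \<ge> 0" "vs \<in> profiles m n"
  shows "profile_prob p vs \<ge> 0"
  using assms unfolding profile_prob_def profiles_def
  by (intro prod_nonneg) (auto simp: subset_iff)

lemma moment1:
  assumes psum: "(\<Sum>r\<in>rankings m. p r) = 1"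
    and Y: "\<And>r vs. r \<in> rankings m \<Longrightarrow> Y (r#vs) = g r + Y vs" "Y [] = 0"
  shows "(\<Sum>vs\<in>profiles m n. profile_prob p vs * Y vs) = real n * (\<Sum>r\<in>rankings m. p r * g r)"
proof (induction n)
  case 0 then show ?case by (simp add: profiles_0 Y)
next
  case (Suc n)
  have "(\<Sum>vs\<in>profiles m (Suc n). profile_prob p vs * Y vs)
     = (\<Sum>r\<in>rankings m. \<Sum>vs\<in>profiles m n. p r * g r * profile_prob p vs + p r * (profile_prob p vs * Y vs))"
    unfolding sum_profiles_Suc by (intro sum.cong refl) (simp add: Y profile_prob_Cons algebra_simps)
  also have "\<dots> = (\<Sum>r\<in>rankings m. p r * g r + p r * (real n * (\<Sum>r\<in>rankings m. p r * g r)))"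
    by (simp add: sum.distrib sum_distrib_left[symmetric] prob_total[OF psum] Suc)
  also have "\<dots> = real (Suc n) * (\<Sum>r\<in>rankings m. p r * g r)"
  proof -
    have "(\<Sum>r\<in>rankings m. p r * (real n * (\<Sum>r\<in>rankings m. p r * g r))) = (\<Sum>r\<in>rankings m. p r) * (real n * (\<Sum>r\<in>rankings m. p r * g r))"
      by (rule sum_distrib_right[symmetric])
    then show ?thesis by (simp add: sum.distrib psum algebra_simps)
  qed
  finally show ?case .
qed

lemma moment2:
  assumes psum: "(\<Sum>r\<in>rankings m. p r) = 1"
    and Y: "\<And>r vs. r \<in> rankings m \<Longrightarrow> Y (r#vs) = g r + Y vs" "Y [] = 0"
    and mu: "mu = (\<Sum>r\<in>rankings m. p r * g r)"
  shows "(\<Sum>vs\<in>profiles m n. profile_prob p vs * (Y vs - real n * mu)^2)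
          = real n * (\<Sum>r\<in>rankings m. p r * (g r - mu)^2)"
proof (induction n)
  case 0 then show ?case by (simp add: profiles_0 Y)
next
  case (Suc n)
  define V where "V = (\<Sum>r\<in>rankings m. p r * (g r - mu)^2)"
  have c: "(\<Sum>vs\<in>profiles m n. profile_prob p vs * (Y vs - real n * mu)) = 0"
  proof -
    have "(\<Sum>vs\<in>profiles m n. profile_prob p vs * (real n * mu)) = (\<Sum>vs\<in>profiles m n. profile_prob p vs) * (real n * mu)"
      by (rule sum_distrib_right[symmetric])
    then show ?thesis using moment1[OF psum Y, of n] prob_total[OF psum, of n]
      by (simp add: right_diff_distrib sum_subtractf mu)
  qed
  have d: "(\<Sum>r\<in>rankings m. p r * (g r - mu)) = 0"
  proof -
    have "(\<Sum>r\<in>rankings m. p r * mu) = (\<Sum>r\<in>rankings m. p r) * mu"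
      by (rule sum_distrib_right[symmetric])
    then show ?thesis using psum by (simp add: right_diff_distrib sum_subtractf mu)
  qed
  have "(\<Sum>vs\<in>profiles m (Suc n). profile_prob p vs * (Y vs - real (Suc n) * mu)^2)
     = (\<Sum>r\<in>rankings m. \<Sum>vs\<in>profiles m n. p r * (g r - mu)^2 * profile_prob p vs
          + 2 * (p r * (g r - mu)) * (profile_prob p vs * (Y vs - real n * mu))
          + p r * (profile_prob p vs * (Y vs - real n * mu)^2))"
    unfolding sum_profiles_Suc by (intro sum.cong refl) (simp add: Y profile_prob_Cons power2_eq_square algebra_simps)
  also have "\<dots> = (\<Sum>r\<in>rankings m. p r * (g r - mu)^2 + 2 * (p r * (g r - mu)) * 0 + p r * (real n * V))"
    by (simp add: sum.distrib sum_distrib_left[symmetric] prob_total[OF psum] Suc c V_def)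
  also have "\<dots> = real (Suc n) * V"
  proof -
    have "(\<Sum>r\<in>rankings m. p r * (real n * V)) = (\<Sum>r\<in>rankings m. p r) * (real n * V)"
      by (rule sum_distrib_right[symmetric])
    then show ?thesis by (simp add: sum.distrib psum algebra_simps V_def)
  qed
  finally show ?case by (simp add: V_def)
qed

lemma rankings_iff: "r \<in> rankings m \<longleftrightarrow> set r = {0..<m} \<and> distinct r"
  by (simp add: rankings_def permutations_of_set_def)

lemma above_asym:
  assumes r: "r \<in> rankings m" and ij: "i < m" "j < m" "i \<noteq> j"
  shows "above r j i \<longleftrightarrow> \<not> above r i j"
proof
  assume "above r j i"
  then obtain a b where ab: "a < b" "b < length r" "r ! a = j" "r ! b = i" by (auto simp: above_def)
  show "\<not> above r i j"
  proof
    assume "above r i j"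
    then obtain a' b' where ab': "a' < b'" "b' < length r" "r ! a' = i" "r ! b' = j" by (auto simp: above_def)
    have d: "distinct r" using r by (simp add: rankings_iff)
    have "a' = b" using ab ab' d by (metis nth_eq_iff_index_eq order.strict_trans)
    moreover have "b' = a" using ab ab' d by (metis nth_eq_iff_index_eq order.strict_trans)
    ultimately show False using ab ab' by simp
  qed
next
  assume n: "\<not> above r i j"
  have s: "set r = {0..<m}" using r by (simp add: rankings_iff)
  obtain a where a: "a < length r" "r ! a = i" using ij s by (metis atLeastLessThan_iff in_set_conv_nth zero_le)
  obtain b where b: "b < length r" "r ! b = j" using ij s by (metis atLeastLessThan_iff in_set_conv_nth zero_le)
  have "a \<noteq> b" using a b ij by auto
  then have "b < a" using n a b unfolding above_def by (metis linorder_neqE_nat)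
  then show "above r j i" using a b unfolding above_def by blast
qed

lemma a_pair_swap:
  assumes "r \<in> rankings m" "i < m" "j < m" "i \<noteq> j"
  shows "a_pair r j i = - a_pair r i j"
  using above_asym[OF assms] by (simp add: a_pair_def)

lemma a_pair_sq: "(a_pair r i j)^2 = 1"
  by (simp add: a_pair_def)

lemma a_triple_eq:
  assumes "r \<in> rankings m" "i < m" "j < m" "l < m" "i \<noteq> j" "i \<noteq> l"
  shows "a_triple r i j l = a_pair r i j * a_pair r i l"
  using above_asym[OF assms(1,2,3,5)] above_asym[OF assms(1,2,4,6)]
  by (auto simp: a_triple_def a_pair_def)

definition ip :: "nat \<Rightarrow> (nat list \<Rightarrow> real) \<Rightarrow> (nat list \<Rightarrow> real) \<Rightarrow> (nat list \<Rightarrow> real) \<Rightarrow> real" where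
  "ip m p u v = (\<Sum>r\<in>rankings m. p r * u r * v r)"

lemma ip_sym: "ip m p u v = ip m p v u"
  unfolding ip_def by (simp add: algebra_simps)

lemma ip_lin:
  assumes "finite K"
  shows "ip m p (\<lambda>r. f r - (\<Sum>k\<in>K. c k * g k r)) x = ip m p f x - (\<Sum>k\<in>K. c k * ip m p (g k) x)"
  unfolding ip_def
  by (simp add: algebra_simps sum_subtractf sum_distrib_left sum_distrib_right sum.swap[of _ K])

lemma ip_scale: "ip m p (\<lambda>r. c * u r) x = c * ip m p u x"
  unfolding ip_def by (simp add: algebra_simps sum_distrib_left)

lemma ip_div_left: "ip m p (\<lambda>r. u r / c) x = ip m p u x / c"
proof -
  have "ip m p (\<lambda>r. u r / c) x = ip m p (\<lambda>r. (1/c) * u r) x" by simp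
  also have "\<dots> = (1/c) * ip m p u x" by (rule ip_scale)
  finally show ?thesis by simp
qed

lemma ip_div_right: "ip m p x (\<lambda>r. u r / c) = ip m p x u / c"
proof -
  have "ip m p x (\<lambda>r. u r / c) = ip m p (\<lambda>r. u r / c) x" by (rule ip_sym)
  also have "\<dots> = ip m p u x / c" by (rule ip_div_left)
  also have "ip m p u x = ip m p x u" by (rule ip_sym)
  finally show ?thesis .
qed

lemma ip_nonneg: assumes "\<forall>r\<in>rankings m. p r \<ge> 0" shows "ip m p v v \<ge> 0"
  unfolding ip_def
proof (intro sum_nonneg)
  fix r assume "r \<in> rankings m"
  then have "0 \<le> p r * (v r * v r)" using assms by (intro mult_nonneg_nonneg zero_le_square) auto
  then show "0 \<le> p r * v r * v r" by (simp only: mult.assoc)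
qed

lemma ip_zero:
  assumes p: "\<forall>r\<in>rankings m. p r \<ge> 0" and z: "ip m p v v = 0"
  shows "ip m p v x = 0"
proof -
  have "\<forall>r\<in>rankings m. p r * v r * v r = 0"
  proof -
    have "\<forall>r\<in>rankings m. 0 \<le> p r * v r * v r"
    proof
      fix r assume "r \<in> rankings m"
      then have "0 \<le> p r * (v r * v r)" using p by (intro mult_nonneg_nonneg zero_le_square) auto
      then show "0 \<le> p r * v r * v r" by (simp only: mult.assoc)
    qed
    then have "(\<Sum>r\<in>rankings m. p r * v r * v r) = 0 \<longleftrightarrow> (\<forall>r\<in>rankings m. p r * v r * v r = 0)"
      using sum_nonneg_eq_0_iff[OF finite_rankings, of m "\<lambda>r. p r * v r * v r"] by blast
    then show ?thesis using z unfolding ip_def by blast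
  qed
  have "\<forall>r\<in>rankings m. p r * v r = 0"
  proof
    fix r assume "r \<in> rankings m"
    then have "(p r * v r) * v r = 0" using \<open>\<forall>r\<in>rankings m. p r * v r * v r = 0\<close> by blast
    then have "p r * v r = 0 \<or> v r = 0" by (simp only: mult_eq_0_iff)
    then show "p r * v r = 0" by (elim disjE) simp_all
  qed
  then show ?thesis unfolding ip_def by (intro sum.neutral) simp
qed

lemma gram_schmidt:
  assumes p: "\<forall>r\<in>rankings m. p r \<ge> 0" and fin: "finite I"
  shows "\<exists>e. (\<forall>k\<in>I. \<forall>k'\<in>I. k \<noteq> k' \<longrightarrow> ip m p (e k) (e k') = 0) \<and>
             (\<forall>k\<in>I. ip m p (e k) (e k) = 0 \<or> ip m p (e k) (e k) = 1) \<and>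
             (\<forall>j\<in>I. \<forall>x. ip m p (b j) x = (\<Sum>k\<in>I. ip m p (b j) (e k) * ip m p (e k) x))"
  using fin
proof (induction I rule: finite_induct)
  case empty
  then show ?case by simp
next
  case (insert j0 I)
  from insert.IH obtain e where
    E: "(\<forall>k\<in>I. \<forall>k'\<in>I. k \<noteq> k' \<longrightarrow> ip m p (e k) (e k') = 0) \<and>
    (\<forall>k\<in>I. ip m p (e k) (e k) = 0 \<or> ip m p (e k) (e k) = 1) \<and>
    (\<forall>j\<in>I. \<forall>x. ip m p (b j) x = (\<Sum>k\<in>I. ip m p (b j) (e k) * ip m p (e k) x))"
    by (rule exE)
  note orth = E[THEN conjunct1] and norm = E[THEN conjunct2, THEN conjunct1]
    and expn = E[THEN conjunct2, THEN conjunct2]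
  define c where "c k = ip m p (b j0) (e k)" for k
  define v where "v = (\<lambda>r. b j0 r - (\<Sum>k\<in>I. c k * e k r))"
  define s where "s = sqrt (ip m p v v)"
  define e' where "e' = e(j0 := (if ip m p v v = 0 then v else (\<lambda>r. v r / s)))"
  have vlin: "ip m p v x = ip m p (b j0) x - (\<Sum>k\<in>I. c k * ip m p (e k) x)" for x
    unfolding v_def by (rule ip_lin[OF insert.hyps(1)])
  have vorth: "ip m p (e k) v = 0" if k: "k \<in> I" for k
  proof -
    have "ip m p (e k) v = ip m p v (e k)" by (rule ip_sym)
    also have "\<dots> = c k - (\<Sum>k'\<in>I. c k' * ip m p (e k') (e k))" by (simp add: vlin c_def)
    also have "(\<Sum>k'\<in>I. c k' * ip m p (e k') (e k)) = c k * ip m p (e k) (e k)"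
      using orth k insert.hyps(1) by (subst sum.remove[of _ k]) auto
    also have "c k - c k * ip m p (e k) (e k) = 0"
    proof (cases "ip m p (e k) (e k) = 0")
      case True
      have "c k = ip m p (e k) (b j0)" unfolding c_def by (rule ip_sym)
      then have "c k = 0" using ip_zero[OF p True] by simp
      then show ?thesis by simp
    next
      case False then show ?thesis using norm k by auto
    qed
    finally show ?thesis .
  qed
  have bv: "ip m p (b j0) v = ip m p v v"
    using vlin[of v] vorth by simp
  have vv: "ip m p v v \<ge> 0" by (rule ip_nonneg[OF p])
  have e'I: "e' k = e k" if "k \<in> I" for k using that insert.hyps(2) by (auto simp: e'_def)
  have e0: "e' j0 = v" if "ip m p v v = 0" using that by (simp add: e'_def)
  have e1: "e' j0 = (\<lambda>r. v r / s)" if "ip m p v v \<noteq> 0" using that by (simp add: e'_def)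
  have e'orth: "ip m p (e k) (e' j0) = 0" if "k \<in> I" for k
  proof (cases "ip m p v v = 0")
    case True then show ?thesis using vorth[OF that] e0 by simp
  next
    case False then show ?thesis using vorth[OF that] e1[OF False] ip_div_right[of m p "e k" v s] by simp
  qed
  have newexp: "ip m p v x = ip m p (b j0) (e' j0) * ip m p (e' j0) x" for x
  proof (cases "ip m p v v = 0")
    case True
    then show ?thesis using ip_zero[OF p True] e0 by simp
  next
    case False
    then have s0: "s > 0" using vv by (simp add: s_def)
    have ss: "s * s = ip m p v v" using vv by (simp add: s_def)
    have "ip m p (b j0) (e' j0) = ip m p v v / s"
      using e1[OF False] bv ip_div_right[of m p "b j0" v s] by simp
    moreover have "ip m p (e' j0) x = ip m p v x / s"
      using e1[OF False] ip_div_left[of m p v s x] by simp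
    ultimately show ?thesis using s0 ss[symmetric] by (simp add: field_simps)
  qed
  show ?case
  proof (intro exI[of _ e'] conjI ballI allI impI)
    fix k k' assume kk: "k \<in> insert j0 I" "k' \<in> insert j0 I" "k \<noteq> k'"
    show "ip m p (e' k) (e' k') = 0"
    proof (cases "k = j0")
      case True
      then have "k' \<in> I" using kk by auto
      then have "ip m p (e' k') (e' j0) = 0" using e'orth[of k'] e'I[of k'] by simp
      then show ?thesis using True ip_sym[of m p "e' k'" "e' j0"] by simp
    next
      case False
      then have k: "k \<in> I" using kk by auto
      show ?thesis
      proof (cases "k' = j0")
        case True then show ?thesis using e'orth[OF k] e'I[OF k] by simp
      next
        case False then show ?thesis using kk k orth e'I by auto
      qed
    qed
  next
    fix k assume k: "k \<in> insert j0 I"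
    show "ip m p (e' k) (e' k) = 0 \<or> ip m p (e' k) (e' k) = 1"
    proof (cases "k = j0")
      case True
      show ?thesis
      proof (cases "ip m p v v = 0")
        case True then show ?thesis using \<open>k = j0\<close> e0 by simp
      next
        case False
        then have "s * s = ip m p v v" "s > 0" using vv by (auto simp: s_def)
        moreover have "ip m p (e' k) (e' k) = ip m p v v / s / s"
          using \<open>k = j0\<close> e1[OF False] ip_div_right[of m p "\<lambda>r. v r / s" v s] ip_div_left[of m p v s v] by simp
        ultimately show ?thesis by simp
      qed
    next
      case False then show ?thesis using k norm e'I by auto
    qed
  next
    fix j x assume j: "j \<in> insert j0 I"
    have sumI: "(\<Sum>k\<in>insert j0 I. ip m p (b j) (e' k) * ip m p (e' k) x)
        = ip m p (b j) (e' j0) * ip m p (e' j0) x + (\<Sum>k\<in>I. ip m p (b j) (e k) * ip m p (e k) x)"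
      using insert.hyps by (simp add: e'I)
    show "ip m p (b j) x = (\<Sum>k\<in>insert j0 I. ip m p (b j) (e' k) * ip m p (e' k) x)"
    proof (cases "j = j0")
      case True
      then show ?thesis unfolding sumI using vlin[of x] newexp[of x] by (simp add: c_def)
    next
      case False
      then have jI: "j \<in> I" using j by auto
      have "ip m p (b j) (e' j0) = (\<Sum>k\<in>I. ip m p (b j) (e k) * ip m p (e k) (e' j0))"
        using expn jI by blast
      also have "\<dots> = 0" using e'orth by simp
      finally show ?thesis unfolding sumI using expn jI by simp
    qed
  qed
qed

lemma gram_exists:
  assumes p: "\<forall>r\<in>rankings m. p r \<ge> 0" and fin: "finite I"
  shows "\<exists>A::nat\<Rightarrow>nat\<Rightarrow>real. \<forall>j\<in>I. \<forall>l\<in>I. (\<Sum>k\<in>I. A j k * A l k) = ip m p (b j) (b l)"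
proof -
  obtain e where
    expn: "\<forall>j\<in>I. \<forall>x. ip m p (b j) x = (\<Sum>k\<in>I. ip m p (b j) (e k) * ip m p (e k) x)"
    using gram_schmidt[OF p fin, of b] by blast
  show ?thesis
  proof (rule exI[of _ "\<lambda>j k. ip m p (b j) (e k)"], intro ballI)
    fix j l assume "j \<in> I" "l \<in> I"
    then have "ip m p (b j) (b l) = (\<Sum>k\<in>I. ip m p (b j) (e k) * ip m p (e k) (b l))" using expn by blast
    then show "(\<Sum>k\<in>I. ip m p (b j) (e k) * ip m p (b l) (e k)) = ip m p (b j) (b l)"
      by (simp add: ip_sym[of m p "e _" "b l"])
  qed
qed

locale setting =
  fixes m :: nat and p :: "nat list \<Rightarrow> real"
  assumes m2: "m \<ge> 2"
    and p_nonneg: "\<forall>r\<in>rankings m. p r \<ge> 0"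
    and p_sum: "(\<Sum>r\<in>rankings m. p r) = 1"
    and lam_lt1: "\<forall>i<m. \<forall>j<m. i \<noteq> j \<longrightarrow> \<bar>lam m p i j\<bar> < 1"
begin

definition bvec :: "nat \<Rightarrow> nat \<Rightarrow> nat list \<Rightarrow> real" where
  "bvec i j r = (a_pair r i j - lam m p i j) / sqrt (1 - (lam m p i j)\<^sup>2)"

lemma sum_pa: "(\<Sum>r\<in>rankings m. p r * a_pair r i j) = lam m p i j"
  unfolding lam_def by (simp add: mult.commute)

lemma corr_ip:
  assumes i: "i < m" and j: "j < m" "j \<noteq> i" and l: "l < m" "l \<noteq> i"
  shows "corrR m p i j l = ip m p (bvec i j) (bvec i l)"
proof -
  define lj where "lj = lam m p i j"
  define ll where "ll = lam m p i l"
  define sj where "sj = sqrt (1 - lj\<^sup>2)"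
  define sl where "sl = sqrt (1 - ll\<^sup>2)"
  have lj1: "\<bar>lj\<bar> < 1" using lam_lt1 i j unfolding lj_def by auto
  have ll1: "\<bar>ll\<bar> < 1" using lam_lt1 i l unfolding ll_def by auto
  have "lj\<^sup>2 < 1" using lj1 by (simp add: abs_square_less_1)
  then have sj0: "sj > 0" by (simp add: sj_def)
  have "ll\<^sup>2 < 1" using ll1 by (simp add: abs_square_less_1)
  then have sl0: "sl > 0" by (simp add: sl_def)
  have sj2: "sj * sj = 1 - lj\<^sup>2" using \<open>lj\<^sup>2 < 1\<close> by (simp add: sj_def)
  have expand: "ip m p (bvec i j) (bvec i l) =
      ((\<Sum>r\<in>rankings m. p r * (a_pair r i j * a_pair r i l)) - lj * ll) / (sj * sl)"
  proof -
    have "ip m p (bvec i j) (bvec i l) =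
       (\<Sum>r\<in>rankings m. (p r * (a_pair r i j * a_pair r i l) - lj * (p r * a_pair r i l)
            - ll * (p r * a_pair r i j) + lj * ll * p r) / (sj * sl))"
      unfolding ip_def bvec_def lj_def[symmetric] ll_def[symmetric] sj_def[symmetric] sl_def[symmetric]
      by (intro sum.cong refl) (simp add: field_simps)
    also have "\<dots> = ((\<Sum>r\<in>rankings m. p r * (a_pair r i j * a_pair r i l)) - lj * ll - ll * lj + lj * ll) / (sj * sl)"
      by (simp add: sum_divide_distrib[symmetric] sum.distrib sum_subtractf sum_distrib_left[symmetric]
            sum_pa lj_def ll_def p_sum)
    finally show ?thesis by simp
  qed
  show ?thesis
  proof (cases "j = l")
    case True
    have "(\<Sum>r\<in>rankings m. p r * (a_pair r i j * a_pair r i l)) = 1"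
      using True p_sum by (simp add: a_pair_sq[unfolded power2_eq_square])
    then show ?thesis unfolding expand using True sj0 sj2 sj_def sl_def lj_def ll_def
      by (simp add: corrR_def power2_eq_square)
  next
    case False
    have "(\<Sum>r\<in>rankings m. a_triple r i j l * p r) = (\<Sum>r\<in>rankings m. p r * (a_pair r i j * a_pair r i l))"
      by (intro sum.cong refl) (simp add: a_triple_eq[OF _ i j(1) l(1) j(2)[symmetric] l(2)[symmetric]])
    moreover have "sqrt ((1 - lj\<^sup>2) * (1 - ll\<^sup>2)) = sj * sl"
      by (simp add: sj_def sl_def real_sqrt_mult)
    ultimately show ?thesis unfolding expand using False
      by (simp add: corrR_def lj_def ll_def)
  qed
qed

lemma A_exists:
  assumes i: "i < m"
  shows "\<exists>A::nat\<Rightarrow>nat\<Rightarrow>real. \<forall>j\<in>{0..<m}-{i}. \<forall>l\<in>{0..<m}-{i}.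
            (\<Sum>k\<in>{0..<m}-{i}. A j k * A l k) = corrR m p i j l"
proof -
  obtain A :: "nat\<Rightarrow>nat\<Rightarrow>real" where A: "\<forall>j\<in>{0..<m}-{i}. \<forall>l\<in>{0..<m}-{i}.
      (\<Sum>k\<in>{0..<m}-{i}. A j k * A l k) = ip m p (bvec i j) (bvec i l)"
    using gram_exists[OF p_nonneg, of "{0..<m}-{i}" "bvec i"] by auto
  show ?thesis
    by (rule exI[of _ A]) (use A corr_ip i in auto)
qed

end

lemma prob_space_std_normal: "prob_space std_normal"
  unfolding std_normal_def by (rule prob_space_normal_density) simp

lemma real_distribution_std_normal: "real_distribution std_normal"
  unfolding std_normal_def by (rule real_dist_normal_dist)

lemma prob_space_gmu: "prob_space (PiM I (\<lambda>_. std_normal))"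
  by (rule prob_space_PiM) (rule prob_space_std_normal)

lemma sets_std_normal [simp, measurable_cong]: "sets std_normal = sets borel"
  by (simp add: std_normal_def)

lemma space_std_normal [simp]: "space std_normal = UNIV"
  by (simp add: std_normal_def)

lemma char_std_normal: "char std_normal t = complex_of_real (exp (- (t^2) / 2))"
  unfolding std_normal_def by (simp add: char_std_normal_distribution)

lemma meas_lin [measurable]:
  "(\<lambda>w. \<Sum>k\<in>I. c k * w k) \<in> borel_measurable (PiM I (\<lambda>_. std_normal))"
  by measurable

lemma char_gauss:
  assumes fin: "finite I"
  shows "(\<integral>w. iexp (\<Sum>k\<in>I. c k * w k) \<partial>PiM I (\<lambda>_. std_normal))
          = complex_of_real (exp (- (\<Sum>k\<in>I. (c k)^2) / 2))"
proof -
  interpret product_prob_space "\<lambda>_. std_normal" I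
    by (simp add: product_prob_space_def product_prob_space_axioms_def product_sigma_finite_def
        prob_space_std_normal prob_space_imp_sigma_finite)
  have e: "iexp (\<Sum>k\<in>I. c k * w k) = (\<Prod>k\<in>I. iexp (c k * w k))" for w
  proof -
    have "\<i> * complex_of_real (\<Sum>k\<in>I. c k * w k) = (\<Sum>k\<in>I. \<i> * complex_of_real (c k * w k))"
      by (simp add: sum_distrib_left)
    then show ?thesis by (simp add: exp_sum[OF fin])
  qed
  have "(\<integral>w. iexp (\<Sum>k\<in>I. c k * w k) \<partial>PiM I (\<lambda>_. std_normal))
      = (\<integral>w. (\<Prod>k\<in>I. (\<lambda>x. iexp (c k * x)) (w k)) \<partial>PiM I (\<lambda>_. std_normal))"
    by (simp only: e)
  also have "\<dots> = (\<Prod>k\<in>I. integral\<^sup>L std_normal (\<lambda>x. iexp (c k * x)))"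
  proof (rule product_integral_prod[OF fin])
    fix k assume "k \<in> I"
    show "integrable std_normal (\<lambda>x. iexp (c k * x))"
      by (rule prob_space.integrable_iexp[OF prob_space_std_normal]) auto
  qed
  also have "\<dots> = (\<Prod>k\<in>I. complex_of_real (exp (- ((c k)^2) / 2)))"
    using char_std_normal unfolding char_def by simp
  also have "\<dots> = complex_of_real (exp (- (\<Sum>k\<in>I. (c k)^2) / 2))"
  proof -
    have "(\<Prod>k\<in>I. exp (- ((c k)^2) / 2)) = exp (\<Sum>k\<in>I. - ((c k)^2) / 2)"
      by (simp add: exp_sum[OF fin])
    also have "(\<Sum>k\<in>I. - ((c k)^2) / 2) = - (\<Sum>k\<in>I. (c k)^2) / 2"
      by (simp add: sum_negf sum_divide_distrib)
    finally show ?thesis by (simp flip: of_real_prod)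
  qed
  finally show ?thesis .
qed

lemma distr_lin_normal:
  assumes fin: "finite I" and c1: "(\<Sum>k\<in>I. (c k)^2) = 1"
  shows "distr (PiM I (\<lambda>_. std_normal)) borel (\<lambda>w. \<Sum>k\<in>I. c k * w k) = std_normal"
proof -
  interpret G: prob_space "PiM I (\<lambda>_. std_normal)" by (rule prob_space_gmu)
  have rd: "real_distribution (distr (PiM I (\<lambda>_. std_normal)) borel (\<lambda>w. \<Sum>k\<in>I. c k * w k))"
    by (rule G.real_distribution_distr) simp
  show ?thesis
  proof (rule Levy_uniqueness[OF rd real_distribution_std_normal], rule ext)
    fix t
    have "char (distr (PiM I (\<lambda>_. std_normal)) borel (\<lambda>w. \<Sum>k\<in>I. c k * w k)) t
        = (\<integral>w. iexp (t * (\<Sum>k\<in>I. c k * w k)) \<partial>PiM I (\<lambda>_. std_normal))"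
      unfolding char_def by (subst integral_distr) auto
    also have "\<dots> = (\<integral>w. iexp (\<Sum>k\<in>I. (t * c k) * w k) \<partial>PiM I (\<lambda>_. std_normal))"
      by (simp add: sum_distrib_left mult.assoc)
    also have "\<dots> = complex_of_real (exp (- (\<Sum>k\<in>I. (t * c k)^2) / 2))"
      by (rule char_gauss[OF fin])
    also have "(\<Sum>k\<in>I. (t * c k)^2) = t^2"
      using c1 by (simp add: power_mult_distrib sum_distrib_left[symmetric])
    finally show "char (distr (PiM I (\<lambda>_. std_normal)) borel (\<lambda>w. \<Sum>k\<in>I. c k * w k)) t = char std_normal t"
      by (simp add: char_std_normal)
  qed
qed

lemma std_normal_small:
  assumes "d \<ge> 0"
  shows "measure std_normal {x. \<bar>x\<bar> \<le> d} \<le> d"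
proof -
  have "emeasure std_normal {x. \<bar>x\<bar> \<le> d} = (\<integral>\<^sup>+ x. ennreal (std_normal_density x) * indicator {x. \<bar>x\<bar> \<le> d} x \<partial>lborel)"
    unfolding std_normal_def by (subst emeasure_density) auto
  also have "\<dots> \<le> (\<integral>\<^sup>+ x. ennreal (1/2) * indicator {-d..d} x \<partial>lborel)"
  proof (intro nn_integral_mono)
    fix x
    have "std_normal_density x \<le> 1 / sqrt (2 * pi)"
      unfolding std_normal_density_def by (simp add: divide_le_cancel)
    also have "1 / sqrt (2 * pi) \<le> 1 / 2"
    proof -
      have "(2::real) \<le> sqrt (2 * pi)"
        using pi_gt3 by (simp add: real_le_rsqrt)
      then show ?thesis by (simp add: divide_le_cancel)
    qed
    finally have "std_normal_density x \<le> 1/2" .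
    then have "ennreal (std_normal_density x) \<le> ennreal (1/2)" by (rule ennreal_leI)
    then show "ennreal (std_normal_density x) * indicator {x. \<bar>x\<bar> \<le> d} x \<le> ennreal (1/2) * indicator {-d..d} x"
      by (cases "\<bar>x\<bar> \<le> d") (auto simp: indicator_def)
  qed
  also have "\<dots> = ennreal (1/2) * ennreal (2 * d)"
    using assms by (simp add: nn_integral_cmult)
  also have "\<dots> = ennreal d"
    using assms by (subst ennreal_mult[symmetric]) auto
  finally have "emeasure std_normal {x. \<bar>x\<bar> \<le> d} \<le> ennreal d" .
  then show ?thesis
    using assms unfolding measure_def by (simp add: enn2real_leI)
qed

lemma std_normal_tail:
  assumes "M > 0"
  shows "measure std_normal {x. M \<le> \<bar>x\<bar>} \<le> 1 / M^2"
proof -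
  interpret S: prob_space std_normal by (rule prob_space_std_normal)
  have int2: "integrable std_normal (\<lambda>x. x^2)"
    unfolding std_normal_def using integrable_std_normal_distribution_moment[of 2] by simp
  have m1: "S.expectation (\<lambda>x. x) = 0"
    unfolding std_normal_def using integral_std_normal_distribution_moment_odd[of 1] by simp
  have m2: "S.expectation (\<lambda>x. x^2) = 1"
    unfolding std_normal_def using std_normal_distribution_even_moments(1)[of 1] by simp
  have "S.prob {x\<in>space std_normal. \<bar>x - S.expectation (\<lambda>x. x)\<bar> \<ge> M} \<le> S.variance (\<lambda>x. x) / M\<^sup>2"
    by (rule S.Chebyshev_inequality) (use int2 assms in auto)
  then show ?thesis using m1 m2 by simp
qed

context setting
begin

lemma sum_p_pair_zero:
  assumes "\<forall>j\<in>J. lam m p i j = 0"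
  shows "(\<Sum>r\<in>rankings m. p r * (\<Sum>j\<in>J. \<theta> j * a_pair r i j)) = 0"
proof -
  have "(\<Sum>r\<in>rankings m. p r * (\<Sum>j\<in>J. \<theta> j * a_pair r i j))
      = (\<Sum>j\<in>J. \<theta> j * (\<Sum>r\<in>rankings m. p r * a_pair r i j))"
    by (simp add: sum_distrib_left sum.swap[of _ J] mult.left_commute)
  also have "\<dots> = 0" using assms by (simp add: sum_pa)
  finally show ?thesis .
qed

lemma disc_char:
  fixes \<theta> :: "nat \<Rightarrow> real" and J :: "nat set"
  assumes lam0: "\<forall>j\<in>J. lam m p i j = 0"
  defines "y \<equiv> (\<lambda>r. \<Sum>j\<in>J. \<theta> j * a_pair r i j)"
  defines "q \<equiv> (\<Sum>r\<in>rankings m. p r * (y r)^2)"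
  shows "(\<lambda>n. \<Sum>vs\<in>profiles m n. complex_of_real (profile_prob p vs) *
              iexp (\<Sum>j\<in>J. \<theta> j * (Sv m i vs j / sqrt (real n))))
         \<longlonglongrightarrow> complex_of_real (exp (- q / 2))"
proof -
  define T where "T vs = (\<Sum>j\<in>J. \<theta> j * Sv m i vs j)" for vs
  define \<phi> where "\<phi> n = (\<Sum>r\<in>rankings m. complex_of_real (p r) * iexp (y r / sqrt (real n)))" for n
  have Tc: "T (r#vs) = y r + T vs" if "r \<in> rankings m" for r vs
    unfolding T_def y_def using Sv_Cons[OF that] by (simp add: algebra_simps sum.distrib)
  have T0: "T [] = 0" by (simp add: T_def Sv_Nil)
  have eq: "(\<Sum>vs\<in>profiles m n. complex_of_real (profile_prob p vs) *
              iexp (\<Sum>j\<in>J. \<theta> j * (Sv m i vs j / sqrt (real n)))) = (\<phi> n)^n" for n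
  proof -
    have "(\<Sum>vs\<in>profiles m n. complex_of_real (profile_prob p vs) *
              iexp (\<Sum>j\<in>J. \<theta> j * (Sv m i vs j / sqrt (real n))))
        = (\<Sum>vs\<in>profiles m n. complex_of_real (profile_prob p vs) * iexp (T vs / sqrt (real n)))"
      unfolding T_def by (simp add: sum_divide_distrib)
    also have "\<dots> = (\<phi> n)^n * (complex_of_real (profile_prob p []) * iexp (T [] / sqrt (real n)))"
      unfolding \<phi>_def
    proof (rule sum_profiles_mult)
      fix r vs assume r: "r \<in> rankings m"
      have "iexp (T (r#vs) / sqrt (real n)) = iexp (y r / sqrt (real n)) * iexp (T vs / sqrt (real n))"
        by (simp add: Tc[OF r] add_divide_distrib distrib_left exp_add)
      then show "complex_of_real (profile_prob p (r # vs)) * iexp (T (r # vs) / sqrt (real n)) =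
          complex_of_real (p r) * iexp (y r / sqrt (real n)) *
          (complex_of_real (profile_prob p vs) * iexp (T vs / sqrt (real n)))"
        by (simp add: profile_prob_Cons)
    qed
    also have "\<dots> = (\<phi> n)^n" by (simp add: T0 profile_prob_Nil)
    finally show ?thesis .
  qed
  have sy: "(\<Sum>r\<in>rankings m. p r * y r) = 0"
    unfolding y_def by (rule sum_p_pair_zero[OF lam0])
  define C where "C = (\<Sum>r\<in>rankings m. p r * \<bar>y r\<bar>^3 / 6)"
  have q0: "q \<ge> 0" unfolding q_def using p_nonneg by (intro sum_nonneg) auto
  have approx: "norm (\<phi> n - complex_of_real (1 + (- q / 2) / real n)) \<le> C * (1 / sqrt (real n))^3" if n: "n > 0" for n
  proof -
    define h where "h = 1 / sqrt (real n)"
    have h0: "h > 0" using n by (simp add: h_def)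
    have hh: "h^2 = 1 / real n" using n by (simp add: h_def power_divide)
    have "complex_of_real (1 + (- q / 2) / real n)
       = (\<Sum>r\<in>rankings m. complex_of_real (p r) * (\<Sum>k\<le>2. (\<i> * (y r * h))^k / fact k))"
    proof -
      have "(\<Sum>r\<in>rankings m. complex_of_real (p r) * (\<Sum>k\<le>2. (\<i> * (y r * h))^k / fact k))
          = (\<Sum>r\<in>rankings m. complex_of_real (p r) + \<i> * h * complex_of_real (p r * y r)
                - complex_of_real (h^2 / 2) * complex_of_real (p r * (y r)^2))"
        by (intro sum.cong refl) (simp add: eval_nat_numeral algebra_simps)
      also have "\<dots> = complex_of_real (\<Sum>r\<in>rankings m. p r) + \<i> * h * complex_of_real (\<Sum>r\<in>rankings m. p r * y r)
           - complex_of_real (h^2 / 2) * complex_of_real q"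
        by (simp add: sum.distrib sum_subtractf sum_distrib_left q_def)
      also have "\<dots> = complex_of_real (1 + (- q / 2) / real n)"
        by (simp add: p_sum sy hh)
      finally show ?thesis by simp
    qed
    then have "\<phi> n - complex_of_real (1 + (- q / 2) / real n)
        = (\<Sum>r\<in>rankings m. complex_of_real (p r) * (iexp (y r * h) - (\<Sum>k\<le>2. (\<i> * (y r * h))^k / fact k)))"
      by (simp add: \<phi>_def h_def sum_subtractf right_diff_distrib)
    then have "norm (\<phi> n - complex_of_real (1 + (- q / 2) / real n))
        \<le> (\<Sum>r\<in>rankings m. norm (complex_of_real (p r) * (iexp (y r * h) - (\<Sum>k\<le>2. (\<i> * (y r * h))^k / fact k))))"
      by (simp add: norm_sum)
    also have "\<dots> \<le> (\<Sum>r\<in>rankings m. p r * (\<bar>y r * h\<bar>^3 / 6))"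
    proof (rule sum_mono)
      fix r assume r: "r \<in> rankings m"
      define X where "X = iexp (y r * h) - (\<Sum>k\<le>2. (\<i> * (y r * h))^k / fact k)"
      have b: "cmod X \<le> \<bar>y r * h\<bar>^3 / 6"
        using iexp_approx1[of "y r * h" 2] unfolding X_def by (simp add: eval_nat_numeral)
      have pr: "p r \<ge> 0" using p_nonneg r by auto
      have "norm (complex_of_real (p r) * X) = p r * cmod X" using pr by (simp add: norm_mult)
      also have "\<dots> \<le> p r * (\<bar>y r * h\<bar>^3 / 6)" using b pr by (rule mult_left_mono)
      finally show "norm (complex_of_real (p r) * (iexp (y r * h) - (\<Sum>k\<le>2. (\<i> * (y r * h))^k / fact k)))
           \<le> p r * (\<bar>y r * h\<bar>^3 / 6)" unfolding X_def .
    qed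
    also have "\<dots> = C * h^3"
      unfolding C_def using h0 by (simp add: sum_distrib_left sum_distrib_right abs_mult power_mult_distrib mult_ac)
    finally show ?thesis by (simp add: h_def)
  qed
  have main: "\<forall>\<^sub>F n in sequentially. norm ((\<phi> n)^n - complex_of_real ((1 + (- q / 2) / real n)^n)) \<le> C / sqrt (real n)"
    using eventually_ge_at_top[of "max 1 (nat \<lceil>q\<rceil>)"]
  proof eventually_elim
    case (elim n)
    then have n: "n > 0" "real n \<ge> q" by auto
    have "norm (\<phi> n) \<le> 1"
    proof -
      have "norm (\<phi> n) \<le> (\<Sum>r\<in>rankings m. norm (complex_of_real (p r) * iexp (y r / sqrt (real n))))"
        unfolding \<phi>_def by (rule norm_sum)
      also have "\<dots> = (\<Sum>r\<in>rankings m. p r)"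
        using p_nonneg by (intro sum.cong refl) (simp add: norm_mult)
      finally show ?thesis using p_sum by simp
    qed
    moreover have "norm (complex_of_real (1 + (- q / 2) / real n)) \<le> 1"
    proof -
      have "\<bar>1 + (- q / 2) / real n\<bar> \<le> 1" using n q0 by (auto simp: abs_le_iff field_simps)
      then show ?thesis by (simp only: norm_of_real)
    qed
    ultimately have "norm ((\<phi> n)^n - (complex_of_real (1 + (- q / 2) / real n))^n)
        \<le> real n * norm (\<phi> n - complex_of_real (1 + (- q / 2) / real n))"
      by (rule norm_power_diff)
    also have "\<dots> \<le> real n * (C * (1 / sqrt (real n))^3)"
      using approx[OF n(1)] by (simp add: mult_left_mono)
    also have "\<dots> = C / sqrt (real n)"
    proof -
      have "sqrt (real n) * sqrt (real n) = real n" by simp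
      then show ?thesis using n by (simp add: field_simps power3_eq_cube)
    qed
    finally show ?case by simp
  qed
  have lim0: "(\<lambda>n. C / sqrt (real n)) \<longlonglongrightarrow> 0"
    by (intro tendsto_divide_0[OF tendsto_const] filterlim_at_top_imp_at_infinity
        filterlim_compose[OF sqrt_at_top filterlim_real_sequentially])
  have "(\<lambda>n. complex_of_real ((1 + (- q / 2) / real n)^n)) \<longlonglongrightarrow> complex_of_real (exp (- q / 2))"
    by (rule isCont_tendsto_compose [OF _ tendsto_exp_limit_sequentially]) auto
  then have "(\<lambda>n. (\<phi> n)^n) \<longlonglongrightarrow> complex_of_real (exp (- q / 2))"
    by (rule Lim_transform) (rule Lim_null_comparison [OF main lim0])
  then show ?thesis by (simp only: eq)
qed

end

definition ef :: "nat set \<Rightarrow> (nat \<Rightarrow> real) \<Rightarrow> (nat \<Rightarrow> real) \<Rightarrow> complex" where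
  "ef J \<theta> z = iexp (\<Sum>j\<in>J. \<theta> j * z j)"

definition tpv :: "nat set \<Rightarrow> (complex \<times> (nat \<Rightarrow> real)) list \<Rightarrow> (nat \<Rightarrow> real) \<Rightarrow> complex" where
  "tpv J L z = sum_list (map (\<lambda>(c,\<theta>). c * ef J \<theta> z) L)"

definition tp :: "nat set \<Rightarrow> ((nat \<Rightarrow> real) \<Rightarrow> complex) \<Rightarrow> bool" where
  "tp J F \<longleftrightarrow> (\<exists>L. \<forall>z. F z = tpv J L z)"

lemma ef_mult: "ef J \<theta>1 z * ef J \<theta>2 z = ef J (\<lambda>j. \<theta>1 j + \<theta>2 j) z"
  unfolding ef_def by (simp add: exp_add[symmetric] algebra_simps sum.distrib)

lemma ef_zero: "ef J (\<lambda>_. 0) z = 1"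
  unfolding ef_def by simp

lemma tpv_Nil [simp]: "tpv J [] z = 0" by (simp add: tpv_def)
lemma tpv_Cons [simp]: "tpv J ((c,\<theta>)#L) z = c * ef J \<theta> z + tpv J L z" by (simp add: tpv_def)
lemma tpv_append: "tpv J (L1 @ L2) z = tpv J L1 z + tpv J L2 z" by (simp add: tpv_def)

lemma tpv_mult1: "c * ef J \<theta> z * tpv J L z = tpv J (map (\<lambda>(c2,\<theta>2). (c*c2, \<lambda>j. \<theta> j + \<theta>2 j)) L) z"
proof (induction L)
  case Nil then show ?case by simp
next
  case (Cons a L)
  obtain c2 \<theta>2 where a: "a = (c2,\<theta>2)" by fastforce
  have "c * ef J \<theta> z * (c2 * ef J \<theta>2 z) = c * c2 * ef J (\<lambda>j. \<theta> j + \<theta>2 j) z"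
    by (simp add: ef_mult[symmetric] mult_ac)
  then show ?case using Cons by (simp add: a distrib_left)
qed

lemma tpv_mult: "tpv J L1 z * tpv J L2 z =
   tpv J (concat (map (\<lambda>(c,\<theta>). map (\<lambda>(c2,\<theta>2). (c*c2, \<lambda>j. \<theta> j + \<theta>2 j)) L2) L1)) z"
proof (induction L1)
  case Nil then show ?case by simp
next
  case (Cons a L1)
  obtain c \<theta> where a: "a = (c,\<theta>)" by fastforce
  show ?case using Cons by (simp add: a distrib_right tpv_append tpv_mult1[symmetric])
qed

lemma tp_const: "tp J (\<lambda>z. c)"
  unfolding tp_def by (rule exI[of _ "[(c, \<lambda>_. 0)]"]) (simp add: ef_zero)

lemma tp_add: assumes "tp J F" "tp J G" shows "tp J (\<lambda>z. F z + G z)"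
proof -
  obtain L1 where 1: "\<forall>z. F z = tpv J L1 z" using assms(1) unfolding tp_def by (rule exE)
  obtain L2 where 2: "\<forall>z. G z = tpv J L2 z" using assms(2) unfolding tp_def by (rule exE)
  show ?thesis unfolding tp_def by (rule exI[of _ "L1 @ L2"]) (simp add: 1 2 tpv_append)
qed

lemma tp_mult: assumes "tp J F" "tp J G" shows "tp J (\<lambda>z. F z * G z)"
proof -
  obtain L1 where 1: "\<forall>z. F z = tpv J L1 z" using assms(1) unfolding tp_def by (rule exE)
  obtain L2 where 2: "\<forall>z. G z = tpv J L2 z" using assms(2) unfolding tp_def by (rule exE)
  show ?thesis unfolding tp_def
    by (rule exI[of _ "concat (map (\<lambda>(c,\<theta>). map (\<lambda>(c2,\<theta>2). (c*c2, \<lambda>j. \<theta> j + \<theta>2 j)) L2) L1)"])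
       (simp only: 1 2 tpv_mult, simp)
qed

lemma tp_sum: "finite S \<Longrightarrow> (\<And>s. s \<in> S \<Longrightarrow> tp J (F s)) \<Longrightarrow> tp J (\<lambda>z. \<Sum>s\<in>S. F s z)"
proof (induction S rule: finite_induct)
  case empty then show ?case using tp_const[of J 0] by simp
next
  case (insert x S) then show ?case by (simp add: tp_add)
qed

lemma tp_prod: "finite S \<Longrightarrow> (\<And>s. s \<in> S \<Longrightarrow> tp J (F s)) \<Longrightarrow> tp J (\<lambda>z. \<Prod>s\<in>S. F s z)"
proof (induction S rule: finite_induct)
  case empty then show ?case using tp_const[of J 1] by simp
next
  case (insert x S) then show ?case by (simp add: tp_mult)
qed

lemma tp_power: "tp J F \<Longrightarrow> tp J (\<lambda>z. (F z)^n)"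
  by (induction n) (simp_all add: tp_const tp_mult)

lemma tp_sin:
  assumes j: "j \<in> J" and fin: "finite J"
  shows "tp J (\<lambda>z. complex_of_real (sin (a * z j)))"
proof -
  define \<theta> where "\<theta> = (\<lambda>k. if k = j then a else 0)"
  define \<eta> where "\<eta> = (\<lambda>k. if k = j then -a else 0)"
  have t: "(\<Sum>k\<in>J. \<theta> k * z k) = a * z j" for z
  proof -
    have "(\<Sum>k\<in>J. \<theta> k * z k) = (\<Sum>k\<in>J. if k = j then a * z j else 0)"
      by (intro sum.cong) (auto simp: \<theta>_def)
    then show ?thesis using j fin by simp
  qed
  have e: "(\<Sum>k\<in>J. \<eta> k * z k) = - (a * z j)" for z
  proof -
    have "(\<Sum>k\<in>J. \<eta> k * z k) = (\<Sum>k\<in>J. if k = j then - (a * z j) else 0)"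
      by (intro sum.cong) (auto simp: \<eta>_def)
    then show ?thesis using j fin by simp
  qed
  show ?thesis unfolding tp_def
  proof (rule exI[of _ "[(1/(2*\<i>), \<theta>), (-1/(2*\<i>), \<eta>)]"], intro allI)
    fix z
    have "complex_of_real (sin (a * z j)) = sin (complex_of_real (a * z j))"
      by (simp only: sin_of_real)
    also have "\<dots> = (iexp (a * z j) - iexp (- (a * z j))) / (2*\<i>)"
      by (simp add: sin_exp_eq)
    also have "\<dots> = tpv J [(1/(2*\<i>), \<theta>), (-1/(2*\<i>), \<eta>)] z"
      by (simp add: ef_def t e diff_divide_distrib) (simp add: algebra_simps diff_divide_distrib)
    finally show "complex_of_real (sin (a * z j)) = tpv J [(1/(2*\<i>), \<theta>), (-1/(2*\<i>), \<eta>)] z" .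
  qed
qed

lemma quad_expand:
  fixes w :: "'x \<Rightarrow> real" and f :: "nat \<Rightarrow> 'x \<Rightarrow> real"
  assumes "finite X" "finite J"
  shows "(\<Sum>x\<in>X. w x * (\<Sum>j\<in>J. \<theta> j * f j x)^2)
       = (\<Sum>j\<in>J. \<Sum>l\<in>J. \<theta> j * \<theta> l * (\<Sum>x\<in>X. w x * f j x * f l x))"
proof -
  have "(\<Sum>x\<in>X. w x * (\<Sum>j\<in>J. \<theta> j * f j x)^2)
      = (\<Sum>x\<in>X. \<Sum>j\<in>J. \<Sum>l\<in>J. \<theta> j * \<theta> l * (w x * f j x * f l x))"
    by (intro sum.cong refl) (simp add: power2_eq_square sum_product sum_distrib_left mult_ac)
  also have "\<dots> = (\<Sum>j\<in>J. \<Sum>l\<in>J. \<Sum>x\<in>X. \<theta> j * \<theta> l * (w x * f j x * f l x))"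
    by (simp add: sum.swap[of _ X])
  also have "\<dots> = (\<Sum>j\<in>J. \<Sum>l\<in>J. \<theta> j * \<theta> l * (\<Sum>x\<in>X. w x * f j x * f l x))"
    by (simp add: sum_distrib_left)
  finally show ?thesis .
qed

locale cand = setting +
  fixes i :: nat and A :: "nat \<Rightarrow> nat \<Rightarrow> real" and J :: "nat set"
  assumes i_lt: "i < m"
    and A_corr: "\<forall>j\<in>{0..<m}-{i}. \<forall>l\<in>{0..<m}-{i}. (\<Sum>k\<in>{0..<m}-{i}. A j k * A l k) = corrR m p i j l"
    and J_sub: "J \<subseteq> {0..<m}-{i}"
    and J_lam: "\<forall>j\<in>J. lam m p i j = 0"
begin

abbreviation II where "II \<equiv> {0..<m} - {i}"
abbreviation mu where "mu \<equiv> PiM II (\<lambda>_. std_normal)"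

definition Zf :: "(nat \<Rightarrow> real) \<Rightarrow> nat \<Rightarrow> real" where
  "Zf w j = (\<Sum>k\<in>II. A j k * w k)"

definition Sn :: "nat \<Rightarrow> nat list list \<Rightarrow> nat \<Rightarrow> real" where
  "Sn n vs j = Sv m i vs j / sqrt (real n)"

lemma finJ: "finite J" using J_sub finite_subset by blast

lemma R_J: assumes "j \<in> J" "l \<in> J"
  shows "(\<Sum>r\<in>rankings m. p r * a_pair r i j * a_pair r i l) = (\<Sum>k\<in>II. A j k * A l k)"
proof -
  have jl: "j < m" "j \<noteq> i" "l < m" "l \<noteq> i" using assms J_sub by auto
  have "corrR m p i j l = ip m p (bvec i j) (bvec i l)"
    by (rule corr_ip[OF i_lt jl])
  also have "\<dots> = (\<Sum>r\<in>rankings m. p r * a_pair r i j * a_pair r i l)"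
    using assms J_lam by (simp add: ip_def bvec_def)
  finally show ?thesis using A_corr jl by auto
qed

lemma ef_Zf: "ef J \<theta> (Zf w) = iexp (\<Sum>k\<in>II. (\<Sum>j\<in>J. \<theta> j * A j k) * w k)"
proof -
  have "(\<Sum>j\<in>J. \<theta> j * Zf w j) = (\<Sum>k\<in>II. (\<Sum>j\<in>J. \<theta> j * A j k) * w k)"
    unfolding Zf_def by (simp add: sum_distrib_left sum_distrib_right sum.swap[of _ J] mult_ac)
  then show ?thesis by (simp add: ef_def)
qed

lemma ef_meas [measurable]: "(\<lambda>w. ef J \<theta> (Zf w)) \<in> borel_measurable mu"
  unfolding ef_Zf by measurable

lemma ef_integrable: "integrable mu (\<lambda>w. ef J \<theta> (Zf w))"
  unfolding ef_Zf
  by (rule prob_space.integrable_iexp[OF prob_space_gmu]) auto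

lemma ef_conv:
  "(\<lambda>n. \<Sum>vs\<in>profiles m n. complex_of_real (profile_prob p vs) * ef J \<theta> (Sn n vs))
     \<longlonglongrightarrow> (\<integral>w. ef J \<theta> (Zf w) \<partial>mu)"
proof -
  define q where "q = (\<Sum>r\<in>rankings m. p r * (\<Sum>j\<in>J. \<theta> j * a_pair r i j)^2)"
  have lim: "(\<lambda>n. \<Sum>vs\<in>profiles m n. complex_of_real (profile_prob p vs) *
              iexp (\<Sum>j\<in>J. \<theta> j * (Sv m i vs j / sqrt (real n))))
         \<longlonglongrightarrow> complex_of_real (exp (- q / 2))"
    unfolding q_def by (rule disc_char[OF J_lam])
  have "q = (\<Sum>j\<in>J. \<Sum>l\<in>J. \<theta> j * \<theta> l * (\<Sum>r\<in>rankings m. p r * a_pair r i j * a_pair r i l))"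
    unfolding q_def by (rule quad_expand[OF finite_rankings finJ])
  also have "\<dots> = (\<Sum>j\<in>J. \<Sum>l\<in>J. \<theta> j * \<theta> l * (\<Sum>k\<in>II. A j k * A l k))"
    using R_J by simp
  also have "\<dots> = (\<Sum>k\<in>II. 1 * (\<Sum>j\<in>J. \<theta> j * A j k)^2)"
    using quad_expand[of II J "\<lambda>_. 1" \<theta> "\<lambda>j k. A j k"] finJ by simp
  finally have q: "q = (\<Sum>k\<in>II. (\<Sum>j\<in>J. \<theta> j * A j k)^2)" by simp
  have "(\<integral>w. ef J \<theta> (Zf w) \<partial>mu) = complex_of_real (exp (- q / 2))"
    unfolding ef_Zf q by (rule char_gauss) simp
  moreover have "ef J \<theta> (Sn n vs) = iexp (\<Sum>j\<in>J. \<theta> j * (Sv m i vs j / sqrt (real n)))" for n vs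
    by (simp add: ef_def Sn_def)
  ultimately show ?thesis using lim by simp
qed

lemma tpv_integrable: "integrable mu (\<lambda>w. tpv J L (Zf w))"
proof (induction L)
  case Nil then show ?case by simp
next
  case (Cons a L)
  obtain c \<theta> where a: "a = (c,\<theta>)" by fastforce
  show ?case unfolding a tpv_Cons
    by (intro Bochner_Integration.integrable_add integrable_mult_right ef_integrable Cons.IH)
qed

lemma tpv_conv:
  "(\<lambda>n. \<Sum>vs\<in>profiles m n. complex_of_real (profile_prob p vs) * tpv J L (Sn n vs))
     \<longlonglongrightarrow> (\<integral>w. tpv J L (Zf w) \<partial>mu)"
proof (induction L)
  case Nil then show ?case by simp
next
  case (Cons a L)
  obtain c \<theta> where a: "a = (c,\<theta>)" by fastforce
  have e1: "(\<Sum>vs\<in>profiles m n. complex_of_real (profile_prob p vs) * tpv J (a#L) (Sn n vs))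
     = c * (\<Sum>vs\<in>profiles m n. complex_of_real (profile_prob p vs) * ef J \<theta> (Sn n vs))
       + (\<Sum>vs\<in>profiles m n. complex_of_real (profile_prob p vs) * tpv J L (Sn n vs))" for n
    by (simp add: a sum.distrib sum_distrib_left distrib_left mult_ac)
  have e2: "(\<integral>w. tpv J (a#L) (Zf w) \<partial>mu) = c * (\<integral>w. ef J \<theta> (Zf w) \<partial>mu) + (\<integral>w. tpv J L (Zf w) \<partial>mu)"
    unfolding a tpv_Cons
    by (subst Bochner_Integration.integral_add) (auto intro!: integrable_mult_right ef_integrable tpv_integrable)
  show ?case unfolding e1 e2
    by (intro tendsto_add tendsto_mult tendsto_const ef_conv Cons.IH)
qed

lemma tp_conv:
  assumes "tp J F"
  shows "(\<lambda>n. \<Sum>vs\<in>profiles m n. complex_of_real (profile_prob p vs) * F (Sn n vs))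
     \<longlonglongrightarrow> (\<integral>w. F (Zf w) \<partial>mu)"
proof -
  obtain L where L: "\<forall>z. F z = tpv J L z" using assms unfolding tp_def by (rule exE)
  show ?thesis unfolding L[rule_format] by (rule tpv_conv)
qed

lemma tp_conv_real:
  assumes "tp J (\<lambda>z. complex_of_real (F z))"
  shows "(\<lambda>n. \<Sum>vs\<in>profiles m n. profile_prob p vs * F (Sn n vs)) \<longlonglongrightarrow> (\<integral>w. F (Zf w) \<partial>mu)"
proof -
  have "(\<lambda>n. complex_of_real (\<Sum>vs\<in>profiles m n. profile_prob p vs * F (Sn n vs)))
      \<longlonglongrightarrow> complex_of_real (\<integral>w. F (Zf w) \<partial>mu)"
    using tp_conv[OF assms] by simp
  then show ?thesis by (simp only: tendsto_of_real_iff)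
qed

end

lemma tp_affine_sin:
  assumes "j \<in> J" "finite J"
  shows "tp J (\<lambda>z. complex_of_real ((sin (a * z j) + 1) / 2))"
proof -
  have "tp J (\<lambda>z. (1/2) * (complex_of_real (sin (a * z j)) + 1))"
    by (intro tp_mult tp_add tp_const tp_sin assms)
  then show ?thesis by (simp add: add_divide_distrib)
qed

lemma bernstein_approx:
  fixes g :: "real \<Rightarrow> real"
  assumes gc: "continuous_on UNIV g" and g01: "\<And>t. 0 \<le> g t \<and> g t \<le> 1"
    and M: "M > 0" and eta: "\<eta> > 0"
  shows "\<exists>Q. continuous_on UNIV Q \<and> (\<forall>t. 0 \<le> Q t \<and> Q t \<le> 1) \<and> (\<forall>t. \<bar>t\<bar> \<le> M \<longrightarrow> \<bar>g t - Q t\<bar> \<le> \<eta>) \<and>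
             (\<forall>J j. j \<in> J \<longrightarrow> finite J \<longrightarrow> tp J (\<lambda>z. complex_of_real (Q (z j))))"
proof -
  define c where "c = pi / (2 * M)"
  have c0: "c > 0" using M by (simp add: c_def)
  define h where "h x = g (arcsin (2 * x - 1) / c)" for x
  have hc: "continuous_on {0..1} h"
    unfolding h_def
    by (rule continuous_on_compose2[OF gc]) (use c0 in \<open>auto intro!: continuous_intros\<close>)
  obtain N where N: "\<forall>n x. N \<le> n \<and> x \<in> {0..1} \<longrightarrow> \<bar>h x - (\<Sum>k\<le>n. h (k/n) * Bernstein n k x)\<bar> < \<eta>"
    using Bernstein_Weierstrass[OF hc eta] by blast
  define X where "X t = (sin (c * t) + 1) / 2" for t
  define Q where "Q t = (\<Sum>k\<le>N. h (k/N) * Bernstein N k (X t))" for t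
  have X01: "0 \<le> X t" "X t \<le> 1" for t
  proof -
    have a: "-1 \<le> sin (c*t)" "sin (c*t) \<le> 1" by simp_all
    have b: "0 \<le> sin (c*t) + 1" "sin (c*t) + 1 \<le> 2" using a by linarith+
    show "0 \<le> X t" unfolding X_def using b by simp
    show "X t \<le> 1" unfolding X_def using b by simp
  qed
  have h01: "0 \<le> h x" "h x \<le> 1" for x unfolding h_def using g01 by auto
  have Q01: "0 \<le> Q t \<and> Q t \<le> 1" for t
  proof
    show "0 \<le> Q t" unfolding Q_def
      by (intro sum_nonneg mult_nonneg_nonneg h01 Bernstein_nonneg X01)
    have "Q t \<le> (\<Sum>k\<le>N. 1 * Bernstein N k (X t))" unfolding Q_def
      by (intro sum_mono mult_right_mono h01 Bernstein_nonneg X01)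
    then show "Q t \<le> 1" by simp
  qed
  have approx: "\<bar>g t - Q t\<bar> \<le> \<eta>" if t: "\<bar>t\<bar> \<le> M" for t
  proof -
    have "\<bar>c * t\<bar> \<le> c * M" using mult_left_mono[OF t, of c] c0 by (simp add: abs_mult)
    moreover have "c * M = pi / 2" using M by (simp add: c_def)
    ultimately have ct: "- (pi/2) \<le> c * t" "c * t \<le> pi/2" by (auto simp: abs_le_iff)
    have "2 * X t - 1 = sin (c * t)" unfolding X_def by (simp add: field_simps)
    then have "arcsin (2 * X t - 1) / c = t"
      using arcsin_sin[OF ct] c0 by simp
    then have "h (X t) = g t" by (simp add: h_def)
    moreover have "\<bar>h (X t) - Q t\<bar> < \<eta>"
      using N X01[of t] unfolding Q_def by auto
    ultimately show ?thesis by simp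
  qed
  have tpQ: "tp J (\<lambda>z. complex_of_real (Q (z j)))" if "j \<in> J" "finite J" for J j
  proof -
    have tX: "tp J (\<lambda>z. complex_of_real (X (z j)))" unfolding X_def by (rule tp_affine_sin[OF that])
    have "tp J (\<lambda>z. \<Sum>k\<le>N. complex_of_real (h (k/N)) * complex_of_real (real (N choose k)) *
              (complex_of_real (X (z j)))^k * (1 + (-1) * complex_of_real (X (z j)))^(N - k))"
      by (intro tp_sum tp_mult tp_power tp_add tp_const finite_atMost tX)
    then show ?thesis
      by (simp add: Q_def Bernstein_def mult.assoc)
  qed
  have Qc: "continuous_on UNIV Q"
    unfolding Q_def X_def Bernstein_def by (intro continuous_intros) auto
  show ?thesis using Qc Q01 approx tpQ by blast
qed

context cand
begin

lemma Zf_meas [measurable]: "(\<lambda>w. Zf w j) \<in> borel_measurable mu"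
  unfolding Zf_def by measurable

lemma Zf_normal:
  assumes j: "j \<in> II"
  shows "distr mu borel (\<lambda>w. Zf w j) = std_normal"
proof -
  have "(\<Sum>k\<in>II. (A j k)^2) = corrR m p i j j"
    using A_corr j by (simp add: power2_eq_square)
  also have "\<dots> = 1" by (simp add: corrR_def)
  finally have "(\<Sum>k\<in>II. (A j k)^2) = 1" .
  then show ?thesis unfolding Zf_def by (intro distr_lin_normal) auto
qed

lemma gauss_tail:
  assumes M: "M > 0"
  shows "measure mu {w\<in>space mu. \<exists>j\<in>J. M \<le> \<bar>Zf w j\<bar>} \<le> real (card J) / M^2"
proof -
  have "{w\<in>space mu. \<exists>j\<in>J. M \<le> \<bar>Zf w j\<bar>} = (\<Union>j\<in>J. {w\<in>space mu. M \<le> \<bar>Zf w j\<bar>})" by auto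
  then have "measure mu {w\<in>space mu. \<exists>j\<in>J. M \<le> \<bar>Zf w j\<bar>} \<le> (\<Sum>j\<in>J. measure mu {w\<in>space mu. M \<le> \<bar>Zf w j\<bar>})"
    using measure_UNION_le[OF finJ, of "\<lambda>j. {w\<in>space mu. M \<le> \<bar>Zf w j\<bar>}" mu] by simp
  also have "\<dots> \<le> (\<Sum>j\<in>J. 1 / M^2)"
  proof (rule sum_mono)
    fix j assume j: "j \<in> J"
    then have jI: "j \<in> II" using J_sub by auto
    have "measure mu {w\<in>space mu. M \<le> \<bar>Zf w j\<bar>} = measure (distr mu borel (\<lambda>w. Zf w j)) {x. M \<le> \<bar>x\<bar>}"
      by (subst measure_distr) (auto simp: vimage_def Int_def conj_commute)
    also have "\<dots> = measure std_normal {x. M \<le> \<bar>x\<bar>}" by (simp add: Zf_normal[OF jI])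
    also have "\<dots> \<le> 1 / M^2" by (rule std_normal_tail[OF M])
    finally show "measure mu {w\<in>space mu. M \<le> \<bar>Zf w j\<bar>} \<le> 1 / M^2" .
  qed
  finally show ?thesis by simp
qed

lemma gauss_small:
  assumes d: "\<delta> \<ge> 0" and j: "j \<in> II"
  shows "measure mu {w\<in>space mu. \<bar>Zf w j\<bar> \<le> \<delta>} \<le> \<delta>"
proof -
  have "measure mu {w\<in>space mu. \<bar>Zf w j\<bar> \<le> \<delta>} = measure (distr mu borel (\<lambda>w. Zf w j)) {x. \<bar>x\<bar> \<le> \<delta>}"
    by (subst measure_distr) (auto simp: vimage_def Int_def conj_commute)
  also have "\<dots> = measure std_normal {x. \<bar>x\<bar> \<le> \<delta>}" by (simp add: Zf_normal[OF j])
  also have "\<dots> \<le> \<delta>" by (rule std_normal_small[OF d])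
  finally show ?thesis .
qed

lemma Sv_sq: assumes j: "j \<in> J"
  shows "(\<Sum>vs\<in>profiles m n. profile_prob p vs * (Sv m i vs j)^2) = real n"
proof -
  have l0: "(\<Sum>r\<in>rankings m. p r * a_pair r i j) = 0" using J_lam j by (simp add: sum_pa)
  have "(\<Sum>vs\<in>profiles m n. profile_prob p vs * (Sv m i vs j - real n * 0)^2)
      = real n * (\<Sum>r\<in>rankings m. p r * (a_pair r i j - 0)^2)"
    by (rule moment2[OF p_sum _ _ l0[symmetric]]) (simp_all add: Sv_Cons Sv_Nil)
  then show ?thesis by (simp add: a_pair_sq p_sum)
qed

lemma disc_tail:
  assumes M: "M > 0"
  shows "(\<Sum>vs\<in>profiles m n. profile_prob p vs * (if \<exists>j\<in>J. M \<le> \<bar>Sn n vs j\<bar> then 1 else 0)) \<le> real (card J) / M^2"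
proof (cases "n = 0")
  case True
  then show ?thesis using M by (simp add: Sn_def)
next
  case False
  then have n: "real n > 0" by simp
  have pn: "profile_prob p vs \<ge> 0" if "vs \<in> profiles m n" for vs using prob_nonneg[OF p_nonneg that] .
  have "(\<Sum>vs\<in>profiles m n. profile_prob p vs * (if \<exists>j\<in>J. M \<le> \<bar>Sn n vs j\<bar> then 1 else 0))
      \<le> (\<Sum>vs\<in>profiles m n. profile_prob p vs * (\<Sum>j\<in>J. (Sv m i vs j)^2 / (M^2 * real n)))"
  proof (rule sum_mono, rule mult_left_mono[OF _ pn])
    fix vs assume vs: "vs \<in> profiles m n"
    show "(if \<exists>j\<in>J. M \<le> \<bar>Sn n vs j\<bar> then 1 else 0) \<le> (\<Sum>j\<in>J. (Sv m i vs j)^2 / (M^2 * real n))"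
    proof (cases "\<exists>j\<in>J. M \<le> \<bar>Sn n vs j\<bar>")
      case True
      then obtain j where j: "j \<in> J" "M \<le> \<bar>Sn n vs j\<bar>" by blast
      have "M \<le> \<bar>Sv m i vs j\<bar> / sqrt (real n)" using j by (simp add: Sn_def)
      then have "M * sqrt (real n) \<le> \<bar>Sv m i vs j\<bar>" using n by (simp add: field_simps)
      then have "(M * sqrt (real n))^2 \<le> \<bar>Sv m i vs j\<bar>^2"
        using M n by (intro power_mono) auto
      then have "M^2 * real n \<le> (Sv m i vs j)^2" using n by (simp add: power_mult_distrib)
      then have "1 \<le> (Sv m i vs j)^2 / (M^2 * real n)" using M n by simp
      also have "\<dots> \<le> (\<Sum>j\<in>J. (Sv m i vs j)^2 / (M^2 * real n))"
        by (rule member_le_sum) (use j finJ in auto)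
      finally show ?thesis using True by simp
    next
      case False then show ?thesis by (simp add: sum_nonneg)
    qed
  qed
  also have "\<dots> = (\<Sum>j\<in>J. (\<Sum>vs\<in>profiles m n. profile_prob p vs * (Sv m i vs j)^2) / (M^2 * real n))"
    by (simp add: sum_distrib_left sum.swap[of _ J] sum_divide_distrib)
  also have "\<dots> = (\<Sum>j\<in>J. 1 / M^2)"
    using n by (intro sum.cong refl) (simp add: Sv_sq)
  finally show ?thesis by simp
qed

end

lemma prod_01:
  fixes f :: "nat \<Rightarrow> real"
  assumes "\<And>j. j \<in> J \<Longrightarrow> 0 \<le> f j \<and> f j \<le> 1"
  shows "0 \<le> (\<Prod>j\<in>J. f j) \<and> (\<Prod>j\<in>J. f j) \<le> 1"
  using assms by (auto intro!: prod_nonneg prod_le_1)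

context cand
begin

lemma prob_space_mu: "prob_space mu" by (rule prob_space_gmu)

lemma cont_conv:
  fixes g :: "real \<Rightarrow> real"
  assumes gc: "continuous_on UNIV g" and g01: "\<And>t. 0 \<le> g t \<and> g t \<le> 1"
  shows "(\<lambda>n. \<Sum>vs\<in>profiles m n. profile_prob p vs * (\<Prod>j\<in>J. g (Sn n vs j)))
           \<longlonglongrightarrow> (\<integral>w. (\<Prod>j\<in>J. g (Zf w j)) \<partial>mu)"
proof (rule LIMSEQ_I)
  fix r :: real assume r: "r > 0"
  interpret P: prob_space mu by (rule prob_space_mu)
  define \<epsilon> where "\<epsilon> = r / 8"
  have e0: "\<epsilon> > 0" using r by (simp add: \<epsilon>_def)
  define d where "d = real (card J)"
  have d0: "d \<ge> 0" by (simp add: d_def)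
  define M where "M = sqrt ((d + 1) / \<epsilon>)"
  have M0: "M > 0" using e0 d0 by (simp add: M_def)
  have M2: "M^2 = (d + 1) / \<epsilon>" using e0 d0 by (simp add: M_def)
  have dM: "d / M^2 \<le> \<epsilon>"
    using e0 d0 by (simp add: M2 field_simps)
  define \<eta> where "\<eta> = \<epsilon> / (d + 1)"
  have eta0: "\<eta> > 0" using e0 d0 by (simp add: \<eta>_def)
  obtain Q where Qc: "continuous_on UNIV Q" and Q01: "\<forall>t. 0 \<le> Q t \<and> Q t \<le> 1"
    and Qa: "\<forall>t. \<bar>t\<bar> \<le> M \<longrightarrow> \<bar>g t - Q t\<bar> \<le> \<eta>"
    and Qtp: "\<forall>J j. j \<in> J \<longrightarrow> finite J \<longrightarrow> tp J (\<lambda>z. complex_of_real (Q (z j)))"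
    using bernstein_approx[OF gc g01 M0 eta0] by blast
  define G where "G z = (\<Prod>j\<in>J. g (z j))" for z :: "nat \<Rightarrow> real"
  define H where "H z = (\<Prod>j\<in>J. Q (z j))" for z :: "nat \<Rightarrow> real"
  define B where "B z = (if \<exists>j\<in>J. M \<le> \<bar>z j\<bar> then 1 else 0::real)" for z :: "nat \<Rightarrow> real"
  have G01: "0 \<le> G z \<and> G z \<le> 1" for z unfolding G_def by (rule prod_01) (use g01 in auto)
  have H01: "0 \<le> H z \<and> H z \<le> 1" for z unfolding H_def by (rule prod_01) (use Q01 in auto)
  have GH: "\<bar>G z - H z\<bar> \<le> \<epsilon> + B z" for z
  proof (cases "\<exists>j\<in>J. M \<le> \<bar>z j\<bar>")
    case True
    then have "B z = 1" by (simp add: B_def)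
    then show ?thesis using G01[of z] H01[of z] e0 by auto
  next
    case False
    then have small: "\<bar>z j\<bar> \<le> M" if "j \<in> J" for j using that by force
    have "norm (G z - H z) \<le> (\<Sum>j\<in>J. norm (g (z j) - Q (z j)))"
      unfolding G_def H_def by (rule norm_prod_diff) (use g01 Q01 in auto)
    also have "\<dots> \<le> (\<Sum>j\<in>J. \<eta>)"
      by (rule sum_mono) (use Qa small in auto)
    also have "\<dots> = d * \<eta>" by (simp add: d_def)
    also have "\<dots> \<le> \<epsilon>" using d0 e0 by (simp add: \<eta>_def field_simps)
    finally show ?thesis using False by (simp add: B_def)
  qed
  have tpH: "tp J (\<lambda>z. complex_of_real (H z))"
    unfolding H_def of_real_prod by (rule tp_prod[OF finJ]) (use Qtp finJ in auto)
  have convH: "(\<lambda>n. \<Sum>vs\<in>profiles m n. profile_prob p vs * H (Sn n vs)) \<longlonglongrightarrow> (\<integral>w. H (Zf w) \<partial>mu)"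
    by (rule tp_conv_real[OF tpH])
  then obtain no where no: "\<forall>n\<ge>no. norm ((\<Sum>vs\<in>profiles m n. profile_prob p vs * H (Sn n vs)) - (\<integral>w. H (Zf w) \<partial>mu)) < \<epsilon>"
    using LIMSEQ_D[OF _ e0] by blast
  have gm [measurable]: "g \<in> borel_measurable borel" by (rule borel_measurable_continuous_onI[OF gc])
  have qm [measurable]: "Q \<in> borel_measurable borel" by (rule borel_measurable_continuous_onI[OF Qc])
  have Gm: "(\<lambda>w. G (Zf w)) \<in> borel_measurable mu" unfolding G_def by measurable
  have Hm: "(\<lambda>w. H (Zf w)) \<in> borel_measurable mu" unfolding H_def by measurable
  have Bm: "(\<lambda>w. B (Zf w)) \<in> borel_measurable mu" unfolding B_def by measurable
  have intG: "integrable mu (\<lambda>w. G (Zf w))"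
    by (rule P.integrable_const_bound[where B=1]) (use G01 Gm in auto)
  have intH: "integrable mu (\<lambda>w. H (Zf w))"
    by (rule P.integrable_const_bound[where B=1]) (use H01 Hm in auto)
  have intB: "integrable mu (\<lambda>w. \<epsilon> + B (Zf w))"
    by (rule P.integrable_const_bound[where B="\<epsilon> + 1"]) (use Bm e0 in \<open>auto simp: B_def\<close>)
  have intGH: "integrable mu (\<lambda>w. G (Zf w) - H (Zf w))" using intG intH by auto
  have intHG: "integrable mu (\<lambda>w. H (Zf w) - G (Zf w))" using intG intH by auto
  define S where "S = {w\<in>space mu. \<exists>j\<in>J. M \<le> \<bar>Zf w j\<bar>}"
  have Sm: "S \<in> sets mu" unfolding S_def by measurable
  have intBi: "(\<integral>w. B (Zf w) \<partial>mu) = measure mu S"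
  proof -
    have "(\<integral>w. B (Zf w) \<partial>mu) = (\<integral>w. indicator S w \<partial>mu)"
      by (rule Bochner_Integration.integral_cong) (auto simp: B_def S_def indicator_def)
    also have "\<dots> = measure mu S" using Sm by (simp add: Int_absorb2 sets.sets_into_space)
    finally show ?thesis .
  qed
  have intBv: "(\<integral>w. \<epsilon> + B (Zf w) \<partial>mu) \<le> 2 * \<epsilon>"
  proof -
    have intB0: "integrable mu (\<lambda>w. B (Zf w))"
      by (rule P.integrable_const_bound[where B="1"]) (use Bm in \<open>auto simp: B_def\<close>)
    have "(\<integral>w. \<epsilon> + B (Zf w) \<partial>mu) = \<epsilon> + measure mu {w\<in>space mu. \<exists>j\<in>J. M \<le> \<bar>Zf w j\<bar>}"
      using intB0 by (subst Bochner_Integration.integral_add) (auto simp: intBi S_def P.prob_space)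
    also have "\<dots> \<le> \<epsilon> + d / M^2" using gauss_tail[OF M0] by (simp add: d_def)
    finally show ?thesis using dM by simp
  qed
  have gauss_cmp: "\<bar>(\<integral>w. G (Zf w) \<partial>mu) - (\<integral>w. H (Zf w) \<partial>mu)\<bar> \<le> 2 * \<epsilon>"
  proof -
    have "(\<integral>w. G (Zf w) - H (Zf w) \<partial>mu) \<le> (\<integral>w. \<epsilon> + B (Zf w) \<partial>mu)"
      by (rule integral_mono[OF intGH intB]) (use GH in \<open>auto simp: abs_le_iff\<close>)
    moreover have "(\<integral>w. H (Zf w) - G (Zf w) \<partial>mu) \<le> (\<integral>w. \<epsilon> + B (Zf w) \<partial>mu)"
      by (rule integral_mono[OF intHG intB]) (use GH in \<open>auto simp: abs_le_iff\<close>)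
    ultimately show ?thesis using intBv intG intH by (auto simp: abs_le_iff)
  qed
  have disc_cmp: "\<bar>(\<Sum>vs\<in>profiles m n. profile_prob p vs * G (Sn n vs)) - (\<Sum>vs\<in>profiles m n. profile_prob p vs * H (Sn n vs))\<bar> \<le> 2 * \<epsilon>" for n
  proof -
    have pn: "profile_prob p vs \<ge> 0" if "vs \<in> profiles m n" for vs using prob_nonneg[OF p_nonneg that] .
    have "\<bar>(\<Sum>vs\<in>profiles m n. profile_prob p vs * G (Sn n vs)) - (\<Sum>vs\<in>profiles m n. profile_prob p vs * H (Sn n vs))\<bar>
        = \<bar>\<Sum>vs\<in>profiles m n. profile_prob p vs * (G (Sn n vs) - H (Sn n vs))\<bar>"
      by (simp add: sum_subtractf right_diff_distrib)
    also have "\<dots> \<le> (\<Sum>vs\<in>profiles m n. \<bar>profile_prob p vs * (G (Sn n vs) - H (Sn n vs))\<bar>)"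
      by (rule sum_abs)
    also have "\<dots> \<le> (\<Sum>vs\<in>profiles m n. profile_prob p vs * (\<epsilon> + B (Sn n vs)))"
      by (rule sum_mono) (use pn GH in \<open>auto simp: abs_mult intro: mult_left_mono\<close>)
    also have "\<dots> = \<epsilon> * (\<Sum>vs\<in>profiles m n. profile_prob p vs) + (\<Sum>vs\<in>profiles m n. profile_prob p vs * B (Sn n vs))"
      by (simp add: sum.distrib distrib_left sum_distrib_left mult_ac)
    also have "\<dots> \<le> \<epsilon> * 1 + d / M^2"
      using disc_tail[OF M0, of n] prob_total[OF p_sum, of n] by (simp add: B_def d_def)
    finally show ?thesis using dM by simp
  qed
  show "\<exists>no. \<forall>n\<ge>no. norm ((\<Sum>vs\<in>profiles m n. profile_prob p vs * (\<Prod>j\<in>J. g (Sn n vs j))) - (\<integral>w. (\<Prod>j\<in>J. g (Zf w j)) \<partial>mu)) < r"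
  proof (intro exI allI impI)
    fix n assume n: "no \<le> n"
    have "norm ((\<Sum>vs\<in>profiles m n. profile_prob p vs * H (Sn n vs)) - (\<integral>w. H (Zf w) \<partial>mu)) < \<epsilon>"
      using no n by blast
    then show "norm ((\<Sum>vs\<in>profiles m n. profile_prob p vs * (\<Prod>j\<in>J. g (Sn n vs j))) - (\<integral>w. (\<Prod>j\<in>J. g (Zf w j)) \<partial>mu)) < r"
      using disc_cmp[of n] gauss_cmp unfolding G_def \<epsilon>_def
      by (simp only: abs_le_iff abs_less_iff real_norm_def) linarith
  qed
qed

end

context cand
begin

lemma int_ind:
  assumes "{w\<in>space mu. P w} \<in> sets mu"
  shows "(\<integral>w. (if P w then 1 else 0::real) \<partial>mu) = measure mu {w\<in>space mu. P w}"
proof -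
  have "(\<integral>w. (if P w then 1 else 0::real) \<partial>mu) = (\<integral>w. indicator {w\<in>space mu. P w} w \<partial>mu)"
    by (rule Bochner_Integration.integral_cong) (auto simp: indicator_def)
  also have "\<dots> = measure mu {w\<in>space mu. P w}"
    using assms by (simp add: Int_absorb2 sets.sets_into_space)
  finally show ?thesis .
qed

lemma gauss_orth_approx:
  fixes g :: "real \<Rightarrow> real"
  assumes gc: "continuous_on UNIV g" and g01: "\<And>t. 0 \<le> g t \<and> g t \<le> 1"
    and d: "\<delta> > 0"
    and gpos: "\<And>t. t > \<delta> \<Longrightarrow> g t = 1" and gneg: "\<And>t. t < - \<delta> \<Longrightarrow> g t = 0"
  shows "\<bar>(\<integral>w. (\<Prod>j\<in>J. g (Zf w j)) \<partial>mu) - measure mu {w\<in>space mu. \<forall>j\<in>J. Zf w j \<ge> 0}\<bar>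
          \<le> real (card J) * \<delta>"
proof -
  interpret P: prob_space mu by (rule prob_space_mu)
  have gm [measurable]: "g \<in> borel_measurable borel" by (rule borel_measurable_continuous_onI[OF gc])
  define F where "F w = (\<Prod>j\<in>J. g (Zf w j))" for w
  define Oi where "Oi w = (if \<forall>j\<in>J. Zf w j \<ge> 0 then 1 else 0::real)" for w
  define Bd where "Bd w = (\<Sum>j\<in>J. if \<bar>Zf w j\<bar> \<le> \<delta> then 1 else 0::real)" for w
  have F01: "0 \<le> F w \<and> F w \<le> 1" for w unfolding F_def by (rule prod_01) (use g01 in auto)
  have pt: "\<bar>F w - Oi w\<bar> \<le> Bd w" for w
  proof (cases "\<exists>j\<in>J. \<bar>Zf w j\<bar> \<le> \<delta>")
    case True
    then obtain j where j: "j \<in> J" "\<bar>Zf w j\<bar> \<le> \<delta>" by blast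
    have "1 \<le> Bd w" unfolding Bd_def
      using member_le_sum[of j J "\<lambda>j. if \<bar>Zf w j\<bar> \<le> \<delta> then 1 else 0::real"] j finJ by auto
    then show ?thesis using F01[of w] by (auto simp: Oi_def)
  next
    case False
    then have far: "\<delta> < \<bar>Zf w j\<bar>" if "j \<in> J" for j using that by force
    have "F w = Oi w"
    proof (cases "\<forall>j\<in>J. Zf w j \<ge> 0")
      case True
      then have "g (Zf w j) = 1" if "j \<in> J" for j using far[OF that] True that by (intro gpos) auto
      then show ?thesis using True by (simp add: F_def Oi_def)
    next
      case False
      then obtain j where j: "j \<in> J" "Zf w j < 0" by force
      then have "g (Zf w j) = 0" using far[OF j(1)] by (intro gneg) auto
      then have "F w = 0" unfolding F_def using j finJ by (auto intro: prod_zero)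
      then show ?thesis using False by (simp add: Oi_def)
    qed
    then show ?thesis by (simp add: Bd_def sum_nonneg)
  qed
  have Fm: "F \<in> borel_measurable mu" unfolding F_def by measurable
  have Oim: "Oi \<in> borel_measurable mu" unfolding Oi_def by measurable
  have Bm: "(\<lambda>w. if \<bar>Zf w j\<bar> \<le> \<delta> then 1 else 0::real) \<in> borel_measurable mu" for j by measurable
  have intF: "integrable mu F" by (rule P.integrable_const_bound[where B=1]) (use F01 Fm in auto)
  have intOi: "integrable mu Oi" by (rule P.integrable_const_bound[where B=1]) (use Oim in \<open>auto simp: Oi_def\<close>)
  have intBj: "integrable mu (\<lambda>w. if \<bar>Zf w j\<bar> \<le> \<delta> then 1 else 0::real)" for j
    by (rule P.integrable_const_bound[where B=1]) (use Bm in auto)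
  have intB: "integrable mu Bd" unfolding Bd_def by (rule Bochner_Integration.integrable_sum) (rule intBj)
  have iOi: "(\<integral>w. Oi w \<partial>mu) = measure mu {w\<in>space mu. \<forall>j\<in>J. Zf w j \<ge> 0}"
    unfolding Oi_def by (rule int_ind) measurable
  have iB: "(\<integral>w. Bd w \<partial>mu) \<le> real (card J) * \<delta>"
  proof -
    have "(\<integral>w. Bd w \<partial>mu) = (\<Sum>j\<in>J. \<integral>w. (if \<bar>Zf w j\<bar> \<le> \<delta> then 1 else 0::real) \<partial>mu)"
      unfolding Bd_def by (rule Bochner_Integration.integral_sum) (rule intBj)
    also have "\<dots> = (\<Sum>j\<in>J. measure mu {w\<in>space mu. \<bar>Zf w j\<bar> \<le> \<delta>})"
      by (intro sum.cong refl int_ind) measurable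
    also have "\<dots> \<le> (\<Sum>j\<in>J. \<delta>)"
      by (intro sum_mono gauss_small) (use d J_sub in auto)
    finally show ?thesis by simp
  qed
  have "(\<integral>w. F w - Oi w \<partial>mu) \<le> (\<integral>w. Bd w \<partial>mu)"
    by (rule integral_mono) (use intF intOi intB pt in \<open>auto simp: abs_le_iff\<close>)
  moreover have "(\<integral>w. Oi w - F w \<partial>mu) \<le> (\<integral>w. Bd w \<partial>mu)"
    by (rule integral_mono) (use intF intOi intB pt in \<open>auto simp: abs_le_iff\<close>)
  ultimately have "\<bar>(\<integral>w. F w \<partial>mu) - (\<integral>w. Oi w \<partial>mu)\<bar> \<le> (\<integral>w. Bd w \<partial>mu)"
    using intF intOi by (auto simp: abs_le_iff)
  then show ?thesis using iOi iB unfolding F_def by simp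
qed

end

definition glo :: "real \<Rightarrow> real \<Rightarrow> real" where "glo \<delta> t = min 1 (max 0 (t / \<delta>))"
definition ghi :: "real \<Rightarrow> real \<Rightarrow> real" where "ghi \<delta> t = min 1 (max 0 (1 + t / \<delta>))"

lemma glo_cont: "continuous_on UNIV (glo \<delta>)" unfolding glo_def
  by (cases "\<delta> = 0") (auto intro!: continuous_intros)
lemma ghi_cont: "continuous_on UNIV (ghi \<delta>)" unfolding ghi_def
  by (cases "\<delta> = 0") (auto intro!: continuous_intros)

lemma ghi_pos: assumes "\<delta> > 0" "t > \<delta>" shows "ghi \<delta> t = 1"
proof -
  have "t / \<delta> > 1" using assms by simp
  then show ?thesis by (simp add: ghi_def)
qed
lemma ghi_neg: assumes "\<delta> > 0" "t < - \<delta>" shows "ghi \<delta> t = 0"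
proof -
  have "t / \<delta> < -1" using assms by (simp add: divide_less_eq)
  then show ?thesis by (simp add: ghi_def)
qed
lemma glo_pos: assumes "\<delta> > 0" "t > \<delta>" shows "glo \<delta> t = 1"
proof -
  have "t / \<delta> > 1" using assms by simp
  then show ?thesis by (simp add: glo_def)
qed
lemma glo_neg: assumes "\<delta> > 0" "t < - \<delta>" shows "glo \<delta> t = 0"
proof -
  have "t / \<delta> < 0" using assms by (simp add: divide_less_0_iff)
  then show ?thesis by (simp add: glo_def)
qed
lemma glo01: "0 \<le> glo \<delta> t \<and> glo \<delta> t \<le> 1" unfolding glo_def by auto
lemma ghi01: "0 \<le> ghi \<delta> t \<and> ghi \<delta> t \<le> 1" unfolding ghi_def by auto

context cand
begin

lemma orth_conv:
  "(\<lambda>n. \<Sum>vs\<in>profiles m n. profile_prob p vs * (if \<forall>j\<in>J. Sv m i vs j \<ge> 1 then 1 else 0))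
     \<longlonglongrightarrow> measure mu {w\<in>space mu. \<forall>j\<in>J. Zf w j \<ge> 0}"
proof (rule LIMSEQ_I)
  fix r :: real assume r: "r > 0"
  define d where "d = real (card J)"
  define \<delta> where "\<delta> = r / (2 * (d + 1))"
  have d0: "d \<ge> 0" by (simp add: d_def)
  have del0: "\<delta> > 0" using r d0 by (simp add: \<delta>_def)
  have dd: "d * \<delta> < r / 2" using r d0 by (simp add: \<delta>_def field_simps)
  define L where "L = measure mu {w\<in>space mu. \<forall>j\<in>J. Zf w j \<ge> 0}"
  define E where "E n f = (\<Sum>vs\<in>profiles m n. profile_prob p vs * f vs)" for n f
  have Emono: "E n f \<le> E n h" if "\<And>vs. f vs \<le> h vs" for n f h
    unfolding E_def
    by (intro sum_mono mult_left_mono that) (use prob_nonneg[OF p_nonneg] in auto)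
  define Ihi where "Ihi = (\<integral>w. (\<Prod>j\<in>J. ghi \<delta> (Zf w j)) \<partial>mu)"
  define Ilo where "Ilo = (\<integral>w. (\<Prod>j\<in>J. glo \<delta> (Zf w j)) \<partial>mu)"
  have hi: "\<bar>Ihi - L\<bar> \<le> d * \<delta>" unfolding Ihi_def L_def d_def
    by (rule gauss_orth_approx[OF ghi_cont ghi01 del0]) (auto intro: ghi_pos ghi_neg del0)
  have lo: "\<bar>Ilo - L\<bar> \<le> d * \<delta>" unfolding Ilo_def L_def d_def
    by (rule gauss_orth_approx[OF glo_cont glo01 del0]) (auto intro: glo_pos glo_neg del0)
  have chi: "(\<lambda>n. E n (\<lambda>vs. \<Prod>j\<in>J. ghi \<delta> (Sn n vs j))) \<longlonglongrightarrow> Ihi"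
    unfolding E_def Ihi_def by (rule cont_conv[OF ghi_cont ghi01])
  have clo: "(\<lambda>n. E n (\<lambda>vs. \<Prod>j\<in>J. glo \<delta> (Sn n vs j))) \<longlonglongrightarrow> Ilo"
    unfolding E_def Ilo_def by (rule cont_conv[OF glo_cont glo01])
  have r2: "r / 2 > 0" using r by simp
  obtain n1 where n1: "\<forall>n\<ge>n1. norm (E n (\<lambda>vs. \<Prod>j\<in>J. ghi \<delta> (Sn n vs j)) - Ihi) < r / 2"
    using LIMSEQ_D[OF chi r2] by blast
  obtain n2 where n2: "\<forall>n\<ge>n2. norm (E n (\<lambda>vs. \<Prod>j\<in>J. glo \<delta> (Sn n vs j)) - Ilo) < r / 2"
    using LIMSEQ_D[OF clo r2] by blast
  define Ind where "Ind vs = (if \<forall>j\<in>J. Sv m i vs j \<ge> 1 then 1 else 0::real)" for vs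
  have up: "Ind vs \<le> (\<Prod>j\<in>J. ghi \<delta> (Sn n vs j))" for n vs
  proof (cases "\<forall>j\<in>J. Sv m i vs j \<ge> 1")
    case True
    have "ghi \<delta> (Sn n vs j) = 1" if "j \<in> J" for j
    proof -
      have "Sv m i vs j \<ge> 0" using True that by force
      then have "Sn n vs j \<ge> 0" by (simp add: Sn_def)
      then show ?thesis using del0 by (simp add: ghi_def)
    qed
    then show ?thesis using True by (simp add: Ind_def)
  next
    case False
    have "0 \<le> (\<Prod>j\<in>J. ghi \<delta> (Sn n vs j))" by (rule prod_01[THEN conjunct1]) (use ghi01 in auto)
    moreover have "Ind vs = 0" using False by (simp add: Ind_def)
    ultimately show ?thesis by simp
  qed
  have down: "(\<Prod>j\<in>J. glo \<delta> (Sn n vs j)) \<le> Ind vs" for n vs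
  proof (cases "\<forall>j\<in>J. Sv m i vs j \<ge> 1")
    case True
    have "(\<Prod>j\<in>J. glo \<delta> (Sn n vs j)) \<le> 1" by (rule prod_01[THEN conjunct2]) (use glo01 in auto)
    then show ?thesis using True by (simp add: Ind_def)
  next
    case False
    then obtain j where j: "j \<in> J" "Sv m i vs j < 1" by force
    have "Sv m i vs j \<le> 0"
    proof -
      obtain z :: int where z: "Sv m i vs j = of_int z" using Sv_Ints by (metis Ints_cases)
      then have "z < 1" using j by simp
      then show ?thesis using z by simp
    qed
    then have "Sn n vs j \<le> 0" by (simp add: Sn_def divide_nonpos_nonneg)
    then have "glo \<delta> (Sn n vs j) = 0" using del0 by (simp add: glo_def divide_nonpos_pos)
    then have "(\<Prod>j\<in>J. glo \<delta> (Sn n vs j)) = 0" using j finJ by (auto intro: prod_zero)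
    then show ?thesis by (simp add: Ind_def)
  qed
  show "\<exists>no. \<forall>n\<ge>no. norm ((\<Sum>vs\<in>profiles m n. profile_prob p vs * (if \<forall>j\<in>J. Sv m i vs j \<ge> 1 then 1 else 0)) - L) < r"
  proof (intro exI allI impI)
    fix n assume n: "max n1 n2 \<le> n"
    have a: "E n Ind \<le> E n (\<lambda>vs. \<Prod>j\<in>J. ghi \<delta> (Sn n vs j))" by (rule Emono) (rule up)
    have b: "E n (\<lambda>vs. \<Prod>j\<in>J. glo \<delta> (Sn n vs j)) \<le> E n Ind" by (rule Emono) (rule down)
    have c: "\<bar>E n (\<lambda>vs. \<Prod>j\<in>J. ghi \<delta> (Sn n vs j)) - Ihi\<bar> < r / 2" using n1 n by auto
    have e: "\<bar>E n (\<lambda>vs. \<Prod>j\<in>J. glo \<delta> (Sn n vs j)) - Ilo\<bar> < r / 2" using n2 n by auto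
    have "\<bar>E n Ind - L\<bar> < r"
      using a b c e hi lo dd by (simp only: abs_le_iff abs_less_iff) linarith
    then show "norm ((\<Sum>vs\<in>profiles m n. profile_prob p vs * (if \<forall>j\<in>J. Sv m i vs j \<ge> 1 then 1 else 0)) - L) < r"
      by (simp add: E_def Ind_def)
  qed
qed

end

context setting
begin

lemma var_bound:
  assumes i: "i < m" and j: "j < m" "j \<noteq> i"
  shows "(\<Sum>vs\<in>profiles m n. profile_prob p vs * (Sv m i vs j - real n * lam m p i j)^2) \<le> real n"
proof -
  have "(\<Sum>vs\<in>profiles m n. profile_prob p vs * (Sv m i vs j - real n * lam m p i j)^2)
      = real n * (\<Sum>r\<in>rankings m. p r * (a_pair r i j - lam m p i j)^2)"
    by (rule moment2[OF p_sum]) (simp_all add: Sv_Cons Sv_Nil sum_pa)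
  also have "(\<Sum>r\<in>rankings m. p r * (a_pair r i j - lam m p i j)^2) = 1 - (lam m p i j)^2"
  proof -
    have "(\<Sum>r\<in>rankings m. p r * (a_pair r i j - lam m p i j)^2)
        = (\<Sum>r\<in>rankings m. p r * (a_pair r i j)^2) - 2 * lam m p i j * (\<Sum>r\<in>rankings m. p r * a_pair r i j)
          + (lam m p i j)^2 * (\<Sum>r\<in>rankings m. p r)"
      by (simp add: power2_diff algebra_simps sum.distrib sum_subtractf sum_distrib_left sum_distrib_right)
    also have "\<dots> = 1 - (lam m p i j)^2" by (simp add: a_pair_sq p_sum sum_pa) (simp add: power2_eq_square)
    finally show ?thesis .
  qed
  also have "real n * (1 - (lam m p i j)^2) \<le> real n" by (simp add: mult_left_le)
  finally show ?thesis .
qed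

lemma wrong_sign:
  assumes i: "i < m" and j: "j < m" "j \<noteq> i" and l: "lam m p i j \<noteq> 0"
    and E: "\<And>n vs. E n vs \<Longrightarrow> \<bar>Sv m i vs j - real n * lam m p i j\<bar> \<ge> real n * \<bar>lam m p i j\<bar> - 1"
  shows "(\<lambda>n. \<Sum>vs\<in>profiles m n. profile_prob p vs * (if E n vs then 1 else 0)) \<longlonglongrightarrow> 0"
proof -
  define a where "a = \<bar>lam m p i j\<bar>"
  have a0: "a > 0" using l by (simp add: a_def)
  have lim: "(\<lambda>n. real n / (real n * a - 1)^2) \<longlonglongrightarrow> 0" using a0 by real_asymp
  have ev: "\<forall>\<^sub>F n in sequentially. norm (\<Sum>vs\<in>profiles m n. profile_prob p vs * (if E n vs then 1 else 0))
             \<le> real n / (real n * a - 1)^2"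
    using eventually_gt_at_top[of "nat \<lceil>2 / a\<rceil>"]
  proof eventually_elim
    case (elim n)
    have na: "real n * a - 1 > 0"
    proof -
      have "real n > 2 / a" using elim by linarith
      then have "real n * a > 2" using a0 by (simp add: field_simps)
      then show ?thesis by simp
    qed
    have pn: "profile_prob p vs \<ge> 0" if "vs \<in> profiles m n" for vs using prob_nonneg[OF p_nonneg that] .
    have s0: "0 \<le> (\<Sum>vs\<in>profiles m n. profile_prob p vs * (if E n vs then 1 else 0))"
      by (intro sum_nonneg) (use pn in auto)
    have "(\<Sum>vs\<in>profiles m n. profile_prob p vs * (if E n vs then 1 else 0))
        \<le> (\<Sum>vs\<in>profiles m n. profile_prob p vs * ((Sv m i vs j - real n * lam m p i j)^2 / (real n * a - 1)^2))"
    proof (intro sum_mono mult_left_mono)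
      fix vs assume "vs \<in> profiles m n"
      show "(if E n vs then 1 else 0) \<le> (Sv m i vs j - real n * lam m p i j)^2 / (real n * a - 1)^2"
      proof (cases "E n vs")
        case True
        then have "real n * a - 1 \<le> \<bar>Sv m i vs j - real n * lam m p i j\<bar>" using E by (simp add: a_def)
        then have "(real n * a - 1)^2 \<le> \<bar>Sv m i vs j - real n * lam m p i j\<bar>^2"
          using na by (intro power_mono) auto
        then show ?thesis using True na by simp
      qed simp
    qed (use pn in auto)
    also have "\<dots> = (\<Sum>vs\<in>profiles m n. profile_prob p vs * (Sv m i vs j - real n * lam m p i j)^2) / (real n * a - 1)^2"
      by (simp add: sum_divide_distrib)
    also have "\<dots> \<le> real n / (real n * a - 1)^2"
      by (rule divide_right_mono[OF var_bound[OF i j]]) simp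
    finally show ?case using s0 by simp
  qed
  show ?thesis by (rule Lim_null_comparison[OF ev lim])
qed

end

lemma prob_event_sum: "prob_event m p n E = (\<Sum>vs\<in>profiles m n. profile_prob p vs * (if E vs then 1 else 0))"
  unfolding prob_event_def by (simp add: sum.inter_filter[OF finite_profiles] if_distrib cong: if_cong)

lemma cw_iff: "condorcet_winner m vs i \<longleftrightarrow> (\<forall>j\<in>{0..<m}-{i}. Sv m i vs j \<ge> 1)"
  unfolding condorcet_winner_def Sv_def by auto

context setting
begin

lemma cand_limit:
  assumes i: "i < m"
  shows "(\<lambda>n. prob_event m p n (\<lambda>vs. condorcet_winner m vs i))
            \<longlonglongrightarrow> gauss_orthant ({0..<m} - {i}) (corrR m p i) (delta m p i)"
proof -
  define I where "I = {0..<m} - {i}"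
  define A where "A = (SOME A :: nat \<Rightarrow> nat \<Rightarrow> real. \<forall>j\<in>I. \<forall>l\<in>I. (\<Sum>k\<in>I. A j k * A l k) = corrR m p i j l)"
  have Acorr: "\<forall>j\<in>I. \<forall>l\<in>I. (\<Sum>k\<in>I. A j k * A l k) = corrR m p i j l"
    unfolding A_def I_def by (rule someI_ex[OF A_exists[OF i]])
  define J where "J = {j\<in>I. lam m p i j = 0}"
  interpret C: cand m p i A J
    by unfold_locales (use m2 p_nonneg p_sum lam_lt1 i Acorr in \<open>auto simp: J_def I_def\<close>)
  have target: "gauss_orthant I (corrR m p i) (delta m p i)
      = measure C.mu {w\<in>space C.mu. \<forall>j\<in>I. ereal (C.Zf w j) \<ge> delta m p i j}"
    unfolding C.Zf_def unfolding gauss_orthant_def Let_def A_def I_def by simp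
  have pe: "prob_event m p n (\<lambda>vs. condorcet_winner m vs i)
      = (\<Sum>vs\<in>profiles m n. profile_prob p vs * (if \<forall>j\<in>I. Sv m i vs j \<ge> 1 then 1 else 0))" for n
    unfolding prob_event_sum cw_iff I_def ..
  have pn: "profile_prob p vs \<ge> 0" if "vs \<in> profiles m n" for vs n using prob_nonneg[OF p_nonneg that] .
  have jI: "j < m" "j \<noteq> i" if "j \<in> I" for j using that by (auto simp: I_def)
  show ?thesis
  proof (cases "\<exists>j0\<in>I. lam m p i j0 < 0")
    case True
    then obtain j0 where j0: "j0 \<in> I" "lam m p i j0 < 0" by blast
    have E0: "{w\<in>space C.mu. \<forall>j\<in>I. ereal (C.Zf w j) \<ge> delta m p i j} = {}"
      using j0 by (auto simp: delta_def)
    have t0: "gauss_orthant I (corrR m p i) (delta m p i) = 0" by (simp only: target E0 measure_empty)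
    have w: "(\<lambda>n. \<Sum>vs\<in>profiles m n. profile_prob p vs * (if Sv m i vs j0 \<ge> 1 then 1 else 0)) \<longlonglongrightarrow> 0"
    proof (rule wrong_sign[OF i jI[OF j0(1)]])
      show "lam m p i j0 \<noteq> 0" using j0 by simp
      fix n vs assume "1 \<le> Sv m i vs j0"
      then show "real n * \<bar>lam m p i j0\<bar> - 1 \<le> \<bar>Sv m i vs j0 - real n * lam m p i j0\<bar>"
        using j0 by (auto simp: abs_if)
    qed
    have "(\<lambda>n. prob_event m p n (\<lambda>vs. condorcet_winner m vs i)) \<longlonglongrightarrow> 0"
    proof (rule tendsto_sandwich[OF _ _ tendsto_const w])
      show "\<forall>\<^sub>F n in sequentially. 0 \<le> prob_event m p n (\<lambda>vs. condorcet_winner m vs i)"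
        unfolding pe by (intro always_eventually allI sum_nonneg) (use pn in auto)
      show "\<forall>\<^sub>F n in sequentially. prob_event m p n (\<lambda>vs. condorcet_winner m vs i)
          \<le> (\<Sum>vs\<in>profiles m n. profile_prob p vs * (if Sv m i vs j0 \<ge> 1 then 1 else 0))"
        unfolding pe by (intro always_eventually allI sum_mono mult_left_mono) (use pn j0 in auto)
    qed
    then show ?thesis using t0 by (simp add: I_def)
  next
    case False
    have E1: "{w\<in>space C.mu. \<forall>j\<in>I. ereal (C.Zf w j) \<ge> delta m p i j} = {w\<in>space C.mu. \<forall>j\<in>J. C.Zf w j \<ge> 0}"
      using False by (auto simp: delta_def J_def not_less)
    have t1: "gauss_orthant I (corrR m p i) (delta m p i) = measure C.mu {w\<in>space C.mu. \<forall>j\<in>J. C.Zf w j \<ge> 0}"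
      by (simp only: target E1)
    define Jp where "Jp = {j\<in>I. lam m p i j > 0}"
    have finJp: "finite Jp" by (simp add: Jp_def I_def)
    define PJ where "PJ n = (\<Sum>vs\<in>profiles m n. profile_prob p vs * (if \<forall>j\<in>J. Sv m i vs j \<ge> 1 then 1 else 0))" for n
    define W where "W n = (\<Sum>j\<in>Jp. \<Sum>vs\<in>profiles m n. profile_prob p vs * (if Sv m i vs j < 1 then 1 else 0))" for n
    have W0: "W \<longlonglongrightarrow> 0"
      unfolding W_def
    proof (rule tendsto_null_sum)
      fix j assume j: "j \<in> Jp"
      then have jI': "j \<in> I" "lam m p i j > 0" by (auto simp: Jp_def)
      show "(\<lambda>n. \<Sum>vs\<in>profiles m n. profile_prob p vs * (if Sv m i vs j < 1 then 1 else 0)) \<longlonglongrightarrow> 0"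
      proof (rule wrong_sign[OF i jI[OF jI'(1)]])
        show "lam m p i j \<noteq> 0" using jI' by simp
        fix n vs assume "Sv m i vs j < 1"
        then show "real n * \<bar>lam m p i j\<bar> - 1 \<le> \<bar>Sv m i vs j - real n * lam m p i j\<bar>"
          using jI' by (auto simp: abs_if)
      qed
    qed
    have PJ: "PJ \<longlonglongrightarrow> measure C.mu {w\<in>space C.mu. \<forall>j\<in>J. C.Zf w j \<ge> 0}"
      unfolding PJ_def by (rule C.orth_conv)
    have bound: "\<bar>prob_event m p n (\<lambda>vs. condorcet_winner m vs i) - PJ n\<bar> \<le> W n" for n
    proof -
      have pt: "\<bar>(if \<forall>j\<in>I. Sv m i vs j \<ge> 1 then 1 else 0) - (if \<forall>j\<in>J. Sv m i vs j \<ge> 1 then 1 else 0)\<bar>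
          \<le> (\<Sum>j\<in>Jp. if Sv m i vs j < 1 then 1 else 0::real)" for vs
      proof (cases "(\<forall>j\<in>I. Sv m i vs j \<ge> 1) = (\<forall>j\<in>J. Sv m i vs j \<ge> 1)")
        case True then show ?thesis by (simp add: sum_nonneg)
      next
        case False
        then obtain j where j: "j \<in> I" "\<not> Sv m i vs j \<ge> 1" "j \<notin> J"
          by (auto simp: J_def)
        then have "j \<in> Jp" using \<open>\<not> (\<exists>j0\<in>I. lam m p i j0 < 0)\<close> by (auto simp: Jp_def J_def)
        then have "1 \<le> (\<Sum>j\<in>Jp. if Sv m i vs j < 1 then 1 else 0::real)"
          using member_le_sum[of j Jp "\<lambda>j. if Sv m i vs j < 1 then 1 else 0::real"] finJp j by auto
        then show ?thesis by auto
      qed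
      have "\<bar>prob_event m p n (\<lambda>vs. condorcet_winner m vs i) - PJ n\<bar>
          = \<bar>\<Sum>vs\<in>profiles m n. profile_prob p vs * ((if \<forall>j\<in>I. Sv m i vs j \<ge> 1 then 1 else 0) - (if \<forall>j\<in>J. Sv m i vs j \<ge> 1 then 1 else 0))\<bar>"
        unfolding pe PJ_def by (simp add: sum_subtractf right_diff_distrib)
      also have "\<dots> \<le> (\<Sum>vs\<in>profiles m n. \<bar>profile_prob p vs * ((if \<forall>j\<in>I. Sv m i vs j \<ge> 1 then 1 else 0) - (if \<forall>j\<in>J. Sv m i vs j \<ge> 1 then 1 else 0))\<bar>)"
        by (rule sum_abs)
      also have "\<dots> \<le> (\<Sum>vs\<in>profiles m n. profile_prob p vs * (\<Sum>j\<in>Jp. if Sv m i vs j < 1 then 1 else 0::real))"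
      proof (rule sum_mono)
        fix vs assume vs: "vs \<in> profiles m n"
        define D where "D = (if \<forall>j\<in>I. Sv m i vs j \<ge> 1 then 1 else 0) - (if \<forall>j\<in>J. Sv m i vs j \<ge> 1 then 1 else 0::real)"
        have "\<bar>profile_prob p vs * D\<bar> = profile_prob p vs * \<bar>D\<bar>" using pn[OF vs] by (simp add: abs_mult)
        also have "\<dots> \<le> profile_prob p vs * (\<Sum>j\<in>Jp. if Sv m i vs j < 1 then 1 else 0::real)"
          by (rule mult_left_mono[OF pt[of vs, folded D_def] pn[OF vs]])
        finally show "\<bar>profile_prob p vs * ((if \<forall>j\<in>I. Sv m i vs j \<ge> 1 then 1 else 0) - (if \<forall>j\<in>J. Sv m i vs j \<ge> 1 then 1 else 0))\<bar>
            \<le> profile_prob p vs * (\<Sum>j\<in>Jp. if Sv m i vs j < 1 then 1 else 0::real)" unfolding D_def .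
      qed
      also have "\<dots> = W n"
        unfolding W_def by (simp add: sum_distrib_left sum.swap[of _ Jp])
      finally show ?thesis .
    qed
    have diff0: "(\<lambda>n. prob_event m p n (\<lambda>vs. condorcet_winner m vs i) - PJ n) \<longlonglongrightarrow> 0"
      by (rule Lim_null_comparison[OF always_eventually W0]) (use bound in auto)
    have "(\<lambda>n. (prob_event m p n (\<lambda>vs. condorcet_winner m vs i) - PJ n) + PJ n)
        \<longlonglongrightarrow> 0 + measure C.mu {w\<in>space C.mu. \<forall>j\<in>J. C.Zf w j \<ge> 0}"
      by (rule tendsto_add[OF diff0 PJ])
    then show ?thesis using t1 by (simp add: I_def)
  qed
qed

lemma unique_winner:
  assumes "i < m" "i' < m" "i \<noteq> i'" "condorcet_winner m vs i" "condorcet_winner m vs i'"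
  shows False
proof -
  have a: "Sv m i vs i' \<ge> 1" using assms cw_iff by auto
  have b: "Sv m i' vs i \<ge> 1" using assms cw_iff by auto
  have "Sv m i' vs i = - Sv m i vs i'"
    unfolding Sv_def using assms(1-3)
    by (simp add: sum_negf[symmetric] a_pair_swap[of _ m i i'] cong: sum.cong)
  then show False using a b by simp
qed

lemma event_split:
  "prob_event m p n (\<lambda>vs. \<exists>i<m. condorcet_winner m vs i) = (\<Sum>i<m. prob_event m p n (\<lambda>vs. condorcet_winner m vs i))"
proof -
  have pt: "(if \<exists>i<m. condorcet_winner m vs i then 1 else 0::real) = (\<Sum>i<m. if condorcet_winner m vs i then 1 else 0)" for vs
  proof (cases "\<exists>i<m. condorcet_winner m vs i")
    case True
    then obtain i0 where i0: "i0 < m" "condorcet_winner m vs i0" by blast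
    have "(\<Sum>i<m. if condorcet_winner m vs i then 1 else 0::real)
        = (if condorcet_winner m vs i0 then 1 else 0) + (\<Sum>i\<in>{..<m}-{i0}. if condorcet_winner m vs i then 1 else 0)"
      using i0 by (subst sum.remove[of _ i0]) auto
    also have "(\<Sum>i\<in>{..<m}-{i0}. if condorcet_winner m vs i then 1 else 0::real) = 0"
    proof (rule sum.neutral, rule ballI)
      fix x assume x: "x \<in> {..<m}-{i0}"
      have "\<not> condorcet_winner m vs x"
      proof
        assume "condorcet_winner m vs x"
        then show False using unique_winner[of i0 x vs] x i0 by simp
      qed
      then show "(if condorcet_winner m vs x then 1 else 0::real) = 0" by simp
    qed
    finally show ?thesis using True i0 by simp
  next
    case False then show ?thesis by simp
  qed
  show ?thesis unfolding prob_event_sum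
    by (simp add: pt sum_distrib_left sum.swap[of _ "{..<m}"])
qed

end

theorem mainTheorem2:
  fixes m :: nat and p :: "nat list \<Rightarrow> real"
  assumes m2: "m \<ge> 2"
    and p_nonneg: "\<forall>r\<in>rankings m. p r \<ge> 0"
    and p_sum: "(\<Sum>r\<in>rankings m. p r) = 1"
    and lam_lt1: "\<forall>i<m. \<forall>j<m. i \<noteq> j \<longrightarrow> \<bar>lam m p i j\<bar> < 1"
  shows "(\<forall>i<m. (\<lambda>n. prob_event m p n (\<lambda>vs. condorcet_winner m vs i))
            \<longlonglongrightarrow> gauss_orthant ({0..<m} - {i}) (corrR m p i) (delta m p i)) \<and>
         (\<lambda>n. prob_event m p n (\<lambda>vs. \<exists>i<m. condorcet_winner m vs i))
            \<longlonglongrightarrow> (\<Sum>i<m. gauss_orthant ({0..<m} - {i}) (corrR m p i) (delta m p i))"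
proof -
  interpret S: setting m p by unfold_locales (use assms in auto)
  have c: "\<forall>i<m. (\<lambda>n. prob_event m p n (\<lambda>vs. condorcet_winner m vs i))
            \<longlonglongrightarrow> gauss_orthant ({0..<m} - {i}) (corrR m p i) (delta m p i)"
    using S.cand_limit by blast
  have "(\<lambda>n. \<Sum>i<m. prob_event m p n (\<lambda>vs. condorcet_winner m vs i))
      \<longlonglongrightarrow> (\<Sum>i<m. gauss_orthant ({0..<m} - {i}) (corrR m p i) (delta m p i))"
    by (rule tendsto_sum) (use c in auto)
  then show ?thesis using c by (simp add: S.event_split)
qed

end
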